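(* Let $K$ be an arbitrary field, $P=K[t][[x_1,\dots,x_s]]$, and $M$ a finitely generated $P$-module. For $t_0\in K$ put $M(t_0):=M\otimes_{K[t]}K[t]/\langle t-t_0\rangle\cong M/\langle t-t_0\rangle M$. Then for every $o\in K$ there is a Zariski open neighborhood $U\subset\mathbb A^1_K=K$ of $o$ such that $\dim_K M(t_0)\le\dim_K M(o)$ for all $t_0\in U$.
   Context: $K[t][[x_1,\dots,x_s]]$ denotes formal power series in $x_1,\dots,x_s$ with coefficients in the polynomial ring $K[t]$. Dimensions may be infinite (the statement is vacuous when $\dim_K M(o)=\infty$). *)

theory Defs
  imports "HOL-Algebra.Module" "HOL-Computational_Algebra.Polynomial" "HOL-Library.Extended_Nat"
begin

text \<open>Elements of P = K[t][[x_1,...,x_s]]: functions from exponent vectors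
  (nat => nat, supported in {0..<s}) to coefficients in K[t] = 'k poly,
  vanishing on exponent vectors involving variables x_i with i >= s.\<close>

definition expvecs :: "nat \<Rightarrow> (nat \<Rightarrow> nat) set" where
  "expvecs s = {\<alpha>. \<forall>i\<ge>s. \<alpha> i = 0}"

definition ps_carrier :: "nat \<Rightarrow> ((nat \<Rightarrow> nat) \<Rightarrow> 'k::field poly) set" where
  "ps_carrier s = {f. \<forall>\<alpha>. \<alpha> \<notin> expvecs s \<longrightarrow> f \<alpha> = 0}"

definition ps_mult :: "nat \<Rightarrow> ((nat \<Rightarrow> nat) \<Rightarrow> 'k::field poly) \<Rightarrow> ((nat \<Rightarrow> nat) \<Rightarrow> 'k poly)
    \<Rightarrow> ((nat \<Rightarrow> nat) \<Rightarrow> 'k poly)" where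
  "ps_mult s f g = (\<lambda>\<alpha>. if \<alpha> \<in> expvecs s
      then (\<Sum>\<beta>\<in>{\<beta>. \<forall>i. \<beta> i \<le> \<alpha> i}. f \<beta> * g (\<lambda>i. \<alpha> i - \<beta> i)) else 0)"

definition PS :: "nat \<Rightarrow> ((nat \<Rightarrow> nat) \<Rightarrow> 'k::field poly) ring" where
  "PS s = \<lparr> carrier = ps_carrier s,
            monoid.mult = ps_mult s,
            monoid.one = (\<lambda>\<alpha>. if \<alpha> = (\<lambda>_. 0) then 1 else 0),
            ring.zero = (\<lambda>_. 0),
            ring.add = (\<lambda>f g \<alpha>. f \<alpha> + g \<alpha>) \<rparr>"

definition ps_const :: "'k::field \<Rightarrow> ((nat \<Rightarrow> nat) \<Rightarrow> 'k poly)" where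
  "ps_const c = (\<lambda>\<alpha>. if \<alpha> = (\<lambda>_. 0) then [:c:] else 0)"

definition ps_t_minus :: "'k::field \<Rightarrow> ((nat \<Rightarrow> nat) \<Rightarrow> 'k poly)" where
  "ps_t_minus t0 = (\<lambda>\<alpha>. if \<alpha> = (\<lambda>_. 0) then [:-t0, 1:] else 0)"

definition fin_gen_module ::
  "nat \<Rightarrow> (((nat \<Rightarrow> nat) \<Rightarrow> 'k::field poly), 'm) module \<Rightarrow> bool" where
  "fin_gen_module s M \<longleftrightarrow> (\<exists>A. finite A \<and> A \<subseteq> carrier M \<and>
     (\<forall>m\<in>carrier M. \<exists>c \<in> A \<rightarrow> carrier (PS s).
        m = finsum M (\<lambda>a. c a \<odot>\<^bsub>M\<^esub> a) A))"

text \<open>The submodule <t - t0> M (the ideal is principal, so it is {(t - t0) m}).\<close>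
definition tsub :: "(((nat \<Rightarrow> nat) \<Rightarrow> 'k::field poly), 'm) module \<Rightarrow> 'k \<Rightarrow> 'm set" where
  "tsub M t0 = {ps_t_minus t0 \<odot>\<^bsub>M\<^esub> m | m. m \<in> carrier M}"

text \<open>B spans M(t0) = M / <t - t0> M over K (K acting through constants in P).\<close>
definition spans_fiber ::
  "(((nat \<Rightarrow> nat) \<Rightarrow> 'k::field poly), 'm) module \<Rightarrow> 'k \<Rightarrow> 'm set \<Rightarrow> bool" where
  "spans_fiber M t0 B \<longleftrightarrow> finite B \<and> B \<subseteq> carrier M \<and>
     (\<forall>m\<in>carrier M. \<exists>c :: 'm \<Rightarrow> 'k.
        m \<ominus>\<^bsub>M\<^esub> finsum M (\<lambda>b. ps_const (c b) \<odot>\<^bsub>M\<^esub> b) B \<in> tsub M t0)"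

text \<open>dim_K M(t0): the minimal size of a finite K-spanning set of M(t0)
  (equal to the vector space dimension), and infinity if there is none.\<close>
definition fiber_dim ::
  "(((nat \<Rightarrow> nat) \<Rightarrow> 'k::field poly), 'm) module \<Rightarrow> 'k \<Rightarrow> enat" where
  "fiber_dim M t0 = (if \<exists>B. spans_fiber M t0 B
     then enat (LEAST n. \<exists>B. spans_fiber M t0 B \<and> card B = n) else \<infinity>)"

definition zariski_open_A1 :: "'k::field set \<Rightarrow> bool" where
  "zariski_open_A1 U \<longleftrightarrow> (\<exists>S :: 'k poly set. U = - {x. \<forall>p\<in>S. poly p x = 0})"

end

theory Submission
  imports Defs "Jordan_Normal_Form.Determinant"
begin

abbreviation z0 :: "nat \<Rightarrow> nat" where "z0 \<equiv> (\<lambda>_. 0)"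

lemma z0_expvecs[simp]: "z0 \<in> expvecs s" by (simp add: expvecs_def)

lemma finite_lowers:
  assumes "\<alpha> \<in> expvecs s"
  shows "finite {\<beta>. \<forall>i. \<beta> i \<le> \<alpha> i}"
proof -
  let ?F = "(\<lambda>f i. if i < s then f i else 0) ` (PiE {..<s} (\<lambda>i. {..\<alpha> i}))"
  have "{\<beta>. \<forall>i. \<beta> i \<le> \<alpha> i} \<subseteq> ?F"
  proof
    fix \<beta> assume b: "\<beta> \<in> {\<beta>. \<forall>i. \<beta> i \<le> \<alpha> i}"
    have "\<beta> = (\<lambda>i. if i < s then restrict \<beta> {..<s} i else 0)"
      using b assms by (auto simp: expvecs_def fun_eq_iff) (metis le_zero_eq not_less)
    moreover have "restrict \<beta> {..<s} \<in> PiE {..<s} (\<lambda>i. {..\<alpha> i})" using b by auto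
    ultimately show "\<beta> \<in> ?F" by blast
  qed
  moreover have "finite ?F" by (intro finite_imageI finite_PiE) auto
  ultimately show ?thesis by (rule finite_subset)
qed

lemma meas_dec:
  assumes a: "\<alpha> \<in> expvecs s" "\<forall>i. \<beta> i \<le> \<alpha> i" "\<beta> \<noteq> z0"
  shows "(\<Sum>i<s. \<alpha> i - \<beta> i) < (\<Sum>i<s. \<alpha> i)"
proof -
  obtain j where j: "\<beta> j \<noteq> 0" using a(3) by auto
  have "j < s"
  proof (rule ccontr)
    assume "\<not> j < s"
    then have "\<alpha> j = 0" using a(1) by (simp add: expvecs_def)
    then show False using a(2) j by (metis le_zero_eq)
  qed
  have "\<alpha> j - \<beta> j < \<alpha> j" using j a(2)[rule_format, of j] by linarith
  show ?thesis
    by (rule sum_strict_mono_ex1) (use \<open>j < s\<close> \<open>\<alpha> j - \<beta> j < \<alpha> j\<close> in auto)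
qed

function pinv :: "nat \<Rightarrow> ((nat \<Rightarrow> nat) \<Rightarrow> 'k::field poly) \<Rightarrow> (nat \<Rightarrow> nat) \<Rightarrow> 'k poly" where
  "pinv s c \<alpha> = (if \<alpha> \<notin> expvecs s then 0 else if \<alpha> = z0 then 1 else
     (\<Sum>\<beta>\<in>{\<beta>. (\<forall>i. \<beta> i \<le> \<alpha> i) \<and> \<beta> \<noteq> z0}. c \<beta> * pinv s c (\<lambda>i. \<alpha> i - \<beta> i)))"
  by auto
termination
  apply (relation "measure (\<lambda>(s,c,\<alpha>). \<Sum>i<s. \<alpha> i)")
   apply simp
  apply (simp only: in_measure split: prod.splits)
  apply (intro allI impI)
  apply (simp only: prod.inject)
  apply (elim conjE)
  apply hypsubst
  apply (rule meas_dec)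
  apply auto
  done

declare pinv.simps[simp del]

definition ps_poly :: "'k::field poly \<Rightarrow> ((nat \<Rightarrow> nat) \<Rightarrow> 'k poly)" where
  "ps_poly p = (\<lambda>\<alpha>. if \<alpha> = z0 then p else 0)"

definition ei :: "nat \<Rightarrow> nat \<Rightarrow> nat" where
  "ei i = (\<lambda>j. if j = i then 1 else 0)"

definition xv :: "nat \<Rightarrow> ((nat \<Rightarrow> nat) \<Rightarrow> 'k::field poly)" where
  "xv i = (\<lambda>\<alpha>. if \<alpha> = ei i then 1 else 0)"

definition dco :: "nat \<Rightarrow> ((nat \<Rightarrow> nat) \<Rightarrow> 'k::field poly) \<Rightarrow> nat \<Rightarrow> ((nat \<Rightarrow> nat) \<Rightarrow> 'k poly)" where
  "dco s p i = (\<lambda>\<alpha>. if \<alpha> \<in> expvecs s \<and> (\<forall>j<i. \<alpha> j = 0) then p (\<lambda>j. \<alpha> j + ei i j) else 0)"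

lemma PS_simps:
  "carrier (PS s) = ps_carrier s"
  "monoid.mult (PS s) = ps_mult s"
  "monoid.one (PS s) = ps_poly 1"
  "ring.zero (PS s) = (\<lambda>_. 0)"
  "ring.add (PS s) = (\<lambda>f g \<alpha>. f \<alpha> + g \<alpha>)"
  by (auto simp: PS_def ps_poly_def fun_eq_iff)

lemma ps_const_poly: "ps_const c = ps_poly [:c:]"
  by (simp add: ps_const_def ps_poly_def)

lemma ps_t_minus_poly: "ps_t_minus c = ps_poly [:-c, 1:]"
  by (simp add: ps_t_minus_def ps_poly_def)

lemma ps_poly_carrier[simp]: "ps_poly p \<in> ps_carrier s"
  by (simp add: ps_poly_def ps_carrier_def)

lemma xv_carrier: "i < s \<Longrightarrow> xv i \<in> ps_carrier s"
  by (auto simp: xv_def ps_carrier_def expvecs_def ei_def)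

lemma dco_carrier: "dco s p i \<in> ps_carrier s"
  by (simp add: dco_def ps_carrier_def)

lemma pinv_carrier: "(\<lambda>\<alpha>. pinv s c \<alpha>) \<in> ps_carrier s"
  by (simp add: ps_carrier_def pinv.simps[of s c])

lemma mult_single_left:
  assumes f: "\<And>\<beta>. \<beta> \<noteq> \<gamma> \<Longrightarrow> f \<beta> = 0"
  shows "ps_mult s f g \<alpha> = (if \<alpha> \<in> expvecs s \<and> (\<forall>i. \<gamma> i \<le> \<alpha> i) then f \<gamma> * g (\<lambda>i. \<alpha> i - \<gamma> i) else 0)"
proof (cases "\<alpha> \<in> expvecs s")
  case True
  have "(\<Sum>\<beta>\<in>{\<beta>. \<forall>i. \<beta> i \<le> \<alpha> i}. f \<beta> * g (\<lambda>i. \<alpha> i - \<beta> i))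
      = (\<Sum>\<beta>\<in>{\<beta>. \<forall>i. \<beta> i \<le> \<alpha> i}. if \<beta> = \<gamma> then f \<gamma> * g (\<lambda>i. \<alpha> i - \<gamma> i) else 0)"
    by (rule sum.cong) (auto simp: f)
  also have "\<dots> = (if (\<forall>i. \<gamma> i \<le> \<alpha> i) then f \<gamma> * g (\<lambda>i. \<alpha> i - \<gamma> i) else 0)"
    using finite_lowers[OF True] by (simp add: sum.delta')
  finally show ?thesis using True by (simp add: ps_mult_def)
qed (simp add: ps_mult_def)

lemma ps_poly_mult: "ps_mult s (ps_poly p) (ps_poly q) = ps_poly (p * q)"
  by (rule ext, subst mult_single_left[where \<gamma> = z0]) (auto simp: ps_poly_def expvecs_def)

lemma ps_poly_add: "ps_poly (p + q) = (\<lambda>\<alpha>. ps_poly p \<alpha> + ps_poly q \<alpha>)"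
  by (auto simp: ps_poly_def)

lemma pinv_mult:
  assumes c: "c z0 = 0"
  shows "ps_mult s (\<lambda>\<alpha>. ps_poly 1 \<alpha> - c \<alpha>) (\<lambda>\<alpha>. pinv s c \<alpha>) = ps_poly 1"
proof
  fix \<alpha>
  show "ps_mult s (\<lambda>\<alpha>. ps_poly 1 \<alpha> - c \<alpha>) (\<lambda>\<alpha>. pinv s c \<alpha>) \<alpha> = ps_poly 1 \<alpha>"
  proof (cases "\<alpha> \<in> expvecs s")
    case False
    then have "\<alpha> \<noteq> z0" by auto
    then show ?thesis using False by (simp add: ps_mult_def ps_poly_def)
  next
    case True
    let ?L = "{\<beta>. \<forall>i. \<beta> i \<le> \<alpha> i}"
    have fin: "finite ?L" by (rule finite_lowers[OF True])
    have z: "z0 \<in> ?L" by simp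
    have "ps_mult s (\<lambda>\<alpha>. ps_poly 1 \<alpha> - c \<alpha>) (\<lambda>\<alpha>. pinv s c \<alpha>) \<alpha>
        = (\<Sum>\<beta>\<in>?L. ps_poly 1 \<beta> * pinv s c (\<lambda>i. \<alpha> i - \<beta> i))
          - (\<Sum>\<beta>\<in>?L. c \<beta> * pinv s c (\<lambda>i. \<alpha> i - \<beta> i))"
      using True by (simp add: ps_mult_def left_diff_distrib sum_subtractf)
    also have "(\<Sum>\<beta>\<in>?L. ps_poly 1 \<beta> * pinv s c (\<lambda>i. \<alpha> i - \<beta> i)) = pinv s c \<alpha>"
    proof -
      have "(\<Sum>\<beta>\<in>?L. ps_poly 1 \<beta> * pinv s c (\<lambda>i. \<alpha> i - \<beta> i))
          = (\<Sum>\<beta>\<in>?L. if \<beta> = z0 then pinv s c \<alpha> else 0)"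
        by (rule sum.cong) (auto simp: ps_poly_def)
      also have "\<dots> = pinv s c \<alpha>" using fin z by (simp add: sum.delta')
      finally show ?thesis .
    qed
    also have "(\<Sum>\<beta>\<in>?L. c \<beta> * pinv s c (\<lambda>i. \<alpha> i - \<beta> i))
        = (\<Sum>\<beta>\<in>{\<beta>. (\<forall>i. \<beta> i \<le> \<alpha> i) \<and> \<beta> \<noteq> z0}. c \<beta> * pinv s c (\<lambda>i. \<alpha> i - \<beta> i))"
    proof -
      have "?L = insert z0 {\<beta>. (\<forall>i. \<beta> i \<le> \<alpha> i) \<and> \<beta> \<noteq> z0}" by auto
      moreover have "finite {\<beta>. (\<forall>i. \<beta> i \<le> \<alpha> i) \<and> \<beta> \<noteq> z0}"
        by (rule finite_subset[OF _ fin]) auto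
      ultimately show ?thesis using c by simp
    qed
    finally have eq: "ps_mult s (\<lambda>\<alpha>. ps_poly 1 \<alpha> - c \<alpha>) (\<lambda>\<alpha>. pinv s c \<alpha>) \<alpha> =
      pinv s c \<alpha> - (\<Sum>\<beta>\<in>{\<beta>. (\<forall>i. \<beta> i \<le> \<alpha> i) \<and> \<beta> \<noteq> z0}. c \<beta> * pinv s c (\<lambda>i. \<alpha> i - \<beta> i))" .
    show ?thesis
    proof (cases "\<alpha> = z0")
      case True
      have emp: "{\<beta>. (\<forall>i. \<beta> i \<le> \<alpha> i) \<and> \<beta> \<noteq> z0} = {}" using True by (auto simp: fun_eq_iff)
      show ?thesis using eq[unfolded emp sum.empty] True by (simp add: ps_poly_def pinv.simps[of s c z0])
    next
      case False
      then show ?thesis using eq \<open>\<alpha> \<in> expvecs s\<close> by (simp add: ps_poly_def pinv.simps[of s c \<alpha>])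
    qed
  qed
qed


lemma xv_dco_apply:
  "ps_mult s (xv i) (dco s p i) \<alpha> =
     (if \<alpha> \<in> expvecs s \<and> 1 \<le> \<alpha> i \<and> (\<forall>j<i. \<alpha> j = 0) then p \<alpha> else 0)"
proof -
  have "ps_mult s (xv i) (dco s p i) \<alpha> =
     (if \<alpha> \<in> expvecs s \<and> (\<forall>j. ei i j \<le> \<alpha> j) then xv i (ei i) * dco s p i (\<lambda>j. \<alpha> j - ei i j) else 0)"
    by (rule mult_single_left) (simp add: xv_def)
  also have "\<dots> = (if \<alpha> \<in> expvecs s \<and> 1 \<le> \<alpha> i \<and> (\<forall>j<i. \<alpha> j = 0) then p \<alpha> else 0)"
  proof (cases "\<alpha> \<in> expvecs s \<and> 1 \<le> \<alpha> i")
    case True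
    have e1: "(\<forall>j. ei i j \<le> \<alpha> j)" using True by (simp add: ei_def)
    have e2: "(\<lambda>j. \<alpha> j - ei i j) \<in> expvecs s" using True by (simp add: expvecs_def)
    have e3: "(\<lambda>ja. \<alpha> ja - ei i ja + ei i ja) = \<alpha>" using True by (auto simp: ei_def fun_eq_iff)
    have e4: "(\<forall>j<i. \<alpha> j - ei i j = 0) = (\<forall>j<i. \<alpha> j = 0)" by (auto simp: ei_def)
    show ?thesis using True e1 e2 e3 e4 by (auto simp add: xv_def dco_def)
  next
    case False
    have "\<not> (\<alpha> \<in> expvecs s \<and> (\<forall>j. ei i j \<le> \<alpha> j))"
    proof
      assume h: "\<alpha> \<in> expvecs s \<and> (\<forall>j. ei i j \<le> \<alpha> j)"
      then have "ei i i \<le> \<alpha> i" by blast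
      then have "1 \<le> \<alpha> i" by (simp add: ei_def)
      with h False show False by blast
    qed
    moreover have "\<not> (\<alpha> \<in> expvecs s \<and> 1 \<le> \<alpha> i \<and> (\<forall>j<i. \<alpha> j = 0))" using False by blast
    ultimately show ?thesis by (simp only: if_False if_not_P)
  qed
  finally show ?thesis .
qed

lemma decomp_apply:
  assumes p: "p \<in> ps_carrier s"
  shows "p \<alpha> = ps_poly (p z0) \<alpha> + (\<Sum>i<s. ps_mult s (xv i) (dco s p i) \<alpha>)"
proof (cases "\<alpha> \<in> expvecs s \<and> \<alpha> \<noteq> z0")
  case True
  have "\<alpha> \<noteq> z0" using True by blast
  then have "\<exists>k. \<alpha> k \<noteq> 0" by (simp add: fun_eq_iff)
  then obtain k where k: "\<alpha> k \<noteq> 0" by blast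
  define i0 where "i0 = (LEAST i. \<alpha> i \<noteq> 0)"
  have i0: "\<alpha> i0 \<noteq> 0" unfolding i0_def by (rule LeastI[of _ k]) (rule k)
  have i0min: "\<alpha> j = 0" if "j < i0" for j
  proof -
    have "\<not> \<alpha> j \<noteq> 0" using that unfolding i0_def by (rule not_less_Least)
    then show ?thesis by simp
  qed
  have i0s: "i0 < s"
  proof (rule ccontr)
    assume "\<not> i0 < s"
    then have "\<alpha> i0 = 0" using True by (simp add: expvecs_def)
    with i0 show False by simp
  qed
  have "(\<Sum>i<s. ps_mult s (xv i) (dco s p i) \<alpha>) = (\<Sum>i<s. if i = i0 then p \<alpha> else 0)"
  proof (rule sum.cong[OF refl])
    fix i assume "i \<in> {..<s}"
    have "(1 \<le> \<alpha> i \<and> (\<forall>j<i. \<alpha> j = 0)) = (i = i0)"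
    proof
      assume h: "1 \<le> \<alpha> i \<and> (\<forall>j<i. \<alpha> j = 0)"
      have "\<not> i < i0"
      proof
        assume "i < i0" then have "\<alpha> i = 0" by (rule i0min)
        with h show False by simp
      qed
      moreover have "\<not> i0 < i"
      proof
        assume "i0 < i" then have "\<alpha> i0 = 0" using h by blast
        with i0 show False by simp
      qed
      ultimately show "i = i0" by simp
    next
      assume "i = i0" then show "1 \<le> \<alpha> i \<and> (\<forall>j<i. \<alpha> j = 0)" using i0 i0min by auto
    qed
    then show "ps_mult s (xv i) (dco s p i) \<alpha> = (if i = i0 then p \<alpha> else 0)"
      unfolding xv_dco_apply using True by (simp only: simp_thms)
  qed
  also have "\<dots> = p \<alpha>" using i0s by (simp add: sum.delta)
  finally show ?thesis using True by (simp add: ps_poly_def)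
next
  case False
  then show ?thesis
  proof (cases "\<alpha> = z0")
    case True
    then show ?thesis by (simp add: ps_poly_def xv_dco_apply)
  next
    case False
    then have "\<alpha> \<notin> expvecs s" using \<open>\<not> (\<alpha> \<in> expvecs s \<and> \<alpha> \<noteq> z0)\<close> by auto
    then show ?thesis using p False by (simp add: ps_poly_def xv_dco_apply ps_carrier_def)
  qed
qed

lemma mult_const_zero:
  assumes "\<alpha> = z0"
  shows "ps_mult s f g \<alpha> = f z0 * g z0"
proof -
  have "{\<beta>. \<forall>i. \<beta> i \<le> \<alpha> i} = {z0}" using assms by (auto simp: fun_eq_iff)
  then show ?thesis using assms by (simp add: ps_mult_def)
qed


definition msub :: "nat \<Rightarrow> ((nat \<Rightarrow> nat) \<Rightarrow> 'k::field poly) set" where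
  "msub s = {c \<in> ps_carrier s. c z0 = 0}"

definition comb :: "('a, 'm) module \<Rightarrow> 'a set \<Rightarrow> 'm set \<Rightarrow> 'm set" where
  "comb M C X = {finsum M (\<lambda>x. c x \<odot>\<^bsub>M\<^esub> x) X | c. c \<in> X \<rightarrow> C}"

definition sumset :: "('a, 'm) module \<Rightarrow> 'm set \<Rightarrow> 'm set \<Rightarrow> 'm set" where
  "sumset M A B = {a \<oplus>\<^bsub>M\<^esub> b | a b. a \<in> A \<and> b \<in> B}"

locale psm = Module.module "PS s" M
  for s :: nat and M :: "(((nat \<Rightarrow> nat) \<Rightarrow> 'k::field poly), 'm) module"
begin

abbreviation RR :: "((nat \<Rightarrow> nat) \<Rightarrow> 'k poly) ring" where "RR \<equiv> PS s"
abbreviation mm :: "((nat \<Rightarrow> nat) \<Rightarrow> 'k poly) set" where "mm \<equiv> msub s"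

lemma carrP: "carrier RR = ps_carrier s" by (simp add: PS_simps)
lemma zeroP: "\<zero>\<^bsub>RR\<^esub> = (\<lambda>_. 0)" by (simp add: PS_simps)
lemma oneP: "\<one>\<^bsub>RR\<^esub> = ps_poly 1" by (simp add: PS_simps)
lemma addP: "a \<oplus>\<^bsub>RR\<^esub> b = (\<lambda>\<alpha>. a \<alpha> + b \<alpha>)" by (simp add: PS_simps)
lemma multP: "a \<otimes>\<^bsub>RR\<^esub> b = ps_mult s a b" by (simp add: PS_simps)

lemma ps_poly_in[simp]: "ps_poly p \<in> carrier RR" by (simp add: carrP)
lemma ps_const_in[simp]: "ps_const c \<in> carrier RR" by (simp add: carrP ps_const_poly)
lemma ps_t_minus_in[simp]: "ps_t_minus c \<in> carrier RR" by (simp add: carrP ps_t_minus_poly)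

lemma ps_poly_mult': "ps_poly p \<otimes>\<^bsub>RR\<^esub> ps_poly q = ps_poly (p * q)"
  by (simp add: multP ps_poly_mult)
lemma ps_poly_add': "ps_poly p \<oplus>\<^bsub>RR\<^esub> ps_poly q = ps_poly (p + q)"
  by (simp add: addP ps_poly_add)
lemma ps_poly_zero: "ps_poly 0 = \<zero>\<^bsub>RR\<^esub>" by (simp add: zeroP ps_poly_def fun_eq_iff)
lemma ps_poly_one: "ps_poly 1 = \<one>\<^bsub>RR\<^esub>" by (simp add: oneP)

lemma a_invP:
  assumes "a \<in> carrier RR"
  shows "\<ominus>\<^bsub>RR\<^esub> a = (\<lambda>\<alpha>. - a \<alpha>)"
proof (rule R.minus_equality)
  show "(\<lambda>\<alpha>. - a \<alpha>) \<in> carrier RR" using assms by (simp add: carrP ps_carrier_def)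
  show "(\<lambda>\<alpha>. - a \<alpha>) \<oplus>\<^bsub>RR\<^esub> a = \<zero>\<^bsub>RR\<^esub>" by (simp add: addP zeroP)
qed (rule assms)

lemma ps_poly_uminus: "ps_poly (- p) = \<ominus>\<^bsub>RR\<^esub> ps_poly p"
  unfolding a_invP[OF ps_poly_in] by (simp add: ps_poly_def fun_eq_iff)

lemma ps_const_mult: "ps_const (a * b) = ps_const a \<otimes>\<^bsub>RR\<^esub> ps_const b"
  by (simp add: ps_const_poly ps_poly_mult' mult.commute)
lemma ps_const_add: "ps_const (a + b) = ps_const a \<oplus>\<^bsub>RR\<^esub> ps_const b"
  by (simp add: ps_const_poly ps_poly_add')
lemma ps_const_zero: "ps_const 0 = \<zero>\<^bsub>RR\<^esub>"
  by (simp add: ps_const_poly ps_poly_zero)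
lemma ps_const_one: "ps_const 1 = \<one>\<^bsub>RR\<^esub>"
  by (simp add: ps_const_poly oneP one_pCons)
lemma ps_const_uminus: "ps_const (- a) = \<ominus>\<^bsub>RR\<^esub> ps_const a"
  by (simp add: ps_const_poly ps_poly_uminus[symmetric])

lemma finsumP:
  assumes "finite I" "f \<in> I \<rightarrow> carrier RR"
  shows "finsum RR f I = (\<lambda>\<alpha>. \<Sum>i\<in>I. f i \<alpha>)"
  using assms
proof (induction I rule: finite_induct)
  case empty
  then show ?case by (simp add: zeroP R.finsum_empty)
next
  case (insert x F)
  have "finsum RR f (insert x F) = f x \<oplus>\<^bsub>RR\<^esub> finsum RR f F"
    using insert by (intro R.finsum_insert) auto
  also have "\<dots> = (\<lambda>\<alpha>. f x \<alpha> + (\<Sum>i\<in>F. f i \<alpha>))" using insert by (simp add: addP)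
  finally show ?case using insert by simp
qed

lemma decomp:
  assumes p: "p \<in> carrier RR"
  shows "p = ps_poly (p z0) \<oplus>\<^bsub>RR\<^esub> (\<Oplus>\<^bsub>RR\<^esub>i\<in>{..<s}. xv i \<otimes>\<^bsub>RR\<^esub> dco s p i)"
proof -
  have cl: "(\<lambda>i. xv i \<otimes>\<^bsub>RR\<^esub> dco s p i) \<in> {..<s} \<rightarrow> carrier RR"
    by (auto simp: carrP intro!: R.m_closed[simplified carrP] xv_carrier dco_carrier)
  show ?thesis
  proof (rule ext)
    fix \<alpha>
    have "p \<alpha> = ps_poly (p z0) \<alpha> + (\<Sum>i<s. ps_mult s (xv i) (dco s p i) \<alpha>)"
      by (rule decomp_apply[OF p[unfolded carrP]])
    also have "\<dots> = (ps_poly (p z0) \<oplus>\<^bsub>RR\<^esub> (\<Oplus>\<^bsub>RR\<^esub>i\<in>{..<s}. xv i \<otimes>\<^bsub>RR\<^esub> dco s p i)) \<alpha>"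
      by (simp add: addP finsumP[OF _ cl] del: PS_simps, simp add: multP)
    finally show "p \<alpha> = (ps_poly (p z0) \<oplus>\<^bsub>RR\<^esub> (\<Oplus>\<^bsub>RR\<^esub>i\<in>{..<s}. xv i \<otimes>\<^bsub>RR\<^esub> dco s p i)) \<alpha>" .
  qed
qed

lemma one_minus_inv:
  assumes c: "c \<in> carrier RR" "c z0 = 0"
  shows "\<exists>u\<in>carrier RR. u \<otimes>\<^bsub>RR\<^esub> (\<one>\<^bsub>RR\<^esub> \<ominus>\<^bsub>RR\<^esub> c) = \<one>\<^bsub>RR\<^esub>"
proof
  show u: "pinv s c \<in> carrier RR" using pinv_carrier[of s c] by (simp add: carrP)
  have e: "\<one>\<^bsub>RR\<^esub> \<ominus>\<^bsub>RR\<^esub> c = (\<lambda>\<alpha>. ps_poly 1 \<alpha> - c \<alpha>)"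
    using c by (simp add: a_minus_def a_invP addP oneP)
  have "(\<one>\<^bsub>RR\<^esub> \<ominus>\<^bsub>RR\<^esub> c) \<otimes>\<^bsub>RR\<^esub> pinv s c = \<one>\<^bsub>RR\<^esub>"
    unfolding multP e unfolding oneP using pinv_mult[of c s, OF c(2)] by simp
  then show "pinv s c \<otimes>\<^bsub>RR\<^esub> (\<one>\<^bsub>RR\<^esub> \<ominus>\<^bsub>RR\<^esub> c) = \<one>\<^bsub>RR\<^esub>"
    using u c by (simp add: R.m_comm)
qed

lemma msub_sub: "mm \<subseteq> carrier RR" by (auto simp: msub_def carrP)

lemma msub_mult: "r \<in> carrier RR \<Longrightarrow> c \<in> mm \<Longrightarrow> r \<otimes>\<^bsub>RR\<^esub> c \<in> mm"
  using R.m_closed[of r c] by (auto simp: msub_def multP mult_const_zero carrP)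

lemma msub_add: "a \<in> mm \<Longrightarrow> b \<in> mm \<Longrightarrow> a \<oplus>\<^bsub>RR\<^esub> b \<in> mm"
  using R.a_closed[of a b] by (auto simp: msub_def addP carrP)

lemma msub_zero: "\<zero>\<^bsub>RR\<^esub> \<in> mm"
  by (auto simp: msub_def zeroP carrP ps_carrier_def)

lemma xv_msub: "i < s \<Longrightarrow> xv i \<in> mm"
proof -
  assume "i < s"
  have "ei i \<noteq> z0" by (auto simp: ei_def fun_eq_iff)
  then have "xv i z0 = (0 :: 'k poly)" by (simp add: xv_def)
  then show ?thesis using xv_carrier[OF \<open>i < s\<close>] by (simp add: msub_def)
qed

end

context psm
begin

abbreviation PP :: "((nat \<Rightarrow> nat) \<Rightarrow> 'k poly) set" where "PP \<equiv> range ps_poly"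
abbreviation KK :: "((nat \<Rightarrow> nat) \<Rightarrow> 'k poly) set" where "KK \<equiv> range ps_const"

definition ksub :: "'m set \<Rightarrow> bool" where
  "ksub W \<longleftrightarrow> W \<subseteq> carrier M \<and> \<zero>\<^bsub>M\<^esub> \<in> W \<and> (\<forall>a\<in>W. \<forall>b\<in>W. a \<oplus>\<^bsub>M\<^esub> b \<in> W)
     \<and> (\<forall>c. \<forall>a\<in>W. ps_const c \<odot>\<^bsub>M\<^esub> a \<in> W)"

definition psub :: "'m set \<Rightarrow> bool" where
  "psub W \<longleftrightarrow> W \<subseteq> carrier M \<and> \<zero>\<^bsub>M\<^esub> \<in> W \<and> (\<forall>a\<in>W. \<forall>b\<in>W. a \<oplus>\<^bsub>M\<^esub> b \<in> W)
     \<and> (\<forall>r\<in>carrier RR. \<forall>a\<in>W. r \<odot>\<^bsub>M\<^esub> a \<in> W)"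

definition addsub :: "((nat \<Rightarrow> nat) \<Rightarrow> 'k poly) set \<Rightarrow> bool" where
  "addsub C \<longleftrightarrow> C \<subseteq> carrier RR \<and> \<zero>\<^bsub>RR\<^esub> \<in> C \<and> (\<forall>a\<in>C. \<forall>b\<in>C. a \<oplus>\<^bsub>RR\<^esub> b \<in> C)"

lemma psub_ksub: "psub W \<Longrightarrow> ksub W"
  unfolding psub_def ksub_def by simp

lemma finsum_in:
  assumes "finite I" "\<zero>\<^bsub>M\<^esub> \<in> S" "\<And>a b. a \<in> S \<Longrightarrow> b \<in> S \<Longrightarrow> a \<oplus>\<^bsub>M\<^esub> b \<in> S"
    "S \<subseteq> carrier M" "f \<in> I \<rightarrow> S"
  shows "finsum M f I \<in> S"
  using assms(1,5)
proof (induction I rule: finite_induct)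
  case empty
  then show ?case using assms(2) by simp
next
  case (insert x F)
  have fc: "f \<in> insert x F \<rightarrow> carrier M" using insert.prems assms(4) by blast
  have "finsum M f (insert x F) = f x \<oplus>\<^bsub>M\<^esub> finsum M f F"
    using insert fc by (intro M.finsum_insert) auto
  moreover have "finsum M f F \<in> S" using insert by auto
  moreover have "f x \<in> S" using insert.prems by auto
  ultimately show ?case using assms(3) by simp
qed

lemma finsum_zero_fun:
  assumes "finite I" "\<And>x. x \<in> I \<Longrightarrow> f x = \<zero>\<^bsub>M\<^esub>"
  shows "finsum M f I = \<zero>\<^bsub>M\<^esub>"
proof -
  have "finsum M f I \<in> {\<zero>\<^bsub>M\<^esub>}"
    by (rule finsum_in) (use assms in auto)
  then show ?thesis by simp
qed

lemma addsub_carrier: "addsub (carrier RR)"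
  unfolding addsub_def by auto

lemma addsub_mm: "addsub mm"
  unfolding addsub_def using msub_sub msub_zero msub_add by auto

lemma addsub_PP: "addsub PP"
  unfolding addsub_def
  by (auto simp: ps_poly_add' ps_poly_zero[symmetric])

lemma addsub_KK: "addsub KK"
  unfolding addsub_def
  by (auto simp: ps_const_add[symmetric] ps_const_zero[symmetric])

lemma comb_memI:
  assumes "c \<in> X \<rightarrow> C" "y = finsum M (\<lambda>x. c x \<odot>\<^bsub>M\<^esub> x) X"
  shows "y \<in> comb M C X"
  unfolding comb_def using assms by blast

lemma comb_carrier:
  assumes "finite X" "X \<subseteq> carrier M" "C \<subseteq> carrier RR"
  shows "comb M C X \<subseteq> carrier M"
proof
  fix y assume "y \<in> comb M C X"
  then obtain c where c: "c \<in> X \<rightarrow> C" "y = finsum M (\<lambda>x. c x \<odot>\<^bsub>M\<^esub> x) X"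
    unfolding comb_def by blast
  have "(\<lambda>x. c x \<odot>\<^bsub>M\<^esub> x) \<in> X \<rightarrow> carrier M" using c(1) assms by blast
  then show "y \<in> carrier M" using c(2) by simp
qed

lemma comb_zero:
  assumes "finite X" "X \<subseteq> carrier M" "\<zero>\<^bsub>RR\<^esub> \<in> C"
  shows "\<zero>\<^bsub>M\<^esub> \<in> comb M C X"
proof -
  have "finsum M (\<lambda>x. \<zero>\<^bsub>RR\<^esub> \<odot>\<^bsub>M\<^esub> x) X = \<zero>\<^bsub>M\<^esub>"
    by (rule finsum_zero_fun) (use assms in auto)
  moreover have "(\<lambda>x. \<zero>\<^bsub>RR\<^esub>) \<in> X \<rightarrow> C" using assms by simp
  ultimately show ?thesis by (intro comb_memI) auto
qed

lemma comb_add: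
  assumes "finite X" "X \<subseteq> carrier M" "addsub C"
    and "y1 \<in> comb M C X" "y2 \<in> comb M C X"
  shows "y1 \<oplus>\<^bsub>M\<^esub> y2 \<in> comb M C X"
proof -
  have C: "C \<subseteq> carrier RR" "\<And>a b. a \<in> C \<Longrightarrow> b \<in> C \<Longrightarrow> a \<oplus>\<^bsub>RR\<^esub> b \<in> C"
    using assms(3) unfolding addsub_def by auto
  obtain c1 where c1: "c1 \<in> X \<rightarrow> C" "y1 = finsum M (\<lambda>x. c1 x \<odot>\<^bsub>M\<^esub> x) X"
    using assms(4) unfolding comb_def by blast
  obtain c2 where c2: "c2 \<in> X \<rightarrow> C" "y2 = finsum M (\<lambda>x. c2 x \<odot>\<^bsub>M\<^esub> x) X"
    using assms(5) unfolding comb_def by blast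
  have f1: "(\<lambda>x. c1 x \<odot>\<^bsub>M\<^esub> x) \<in> X \<rightarrow> carrier M" using c1(1) C(1) assms(2) by blast
  have f2: "(\<lambda>x. c2 x \<odot>\<^bsub>M\<^esub> x) \<in> X \<rightarrow> carrier M" using c2(1) C(1) assms(2) by blast
  have "y1 \<oplus>\<^bsub>M\<^esub> y2 = finsum M (\<lambda>x. c1 x \<odot>\<^bsub>M\<^esub> x \<oplus>\<^bsub>M\<^esub> c2 x \<odot>\<^bsub>M\<^esub> x) X"
    using c1(2) c2(2) M.finsum_addf[OF f1 f2] by simp
  also have "\<dots> = finsum M (\<lambda>x. (c1 x \<oplus>\<^bsub>RR\<^esub> c2 x) \<odot>\<^bsub>M\<^esub> x) X"
  proof (rule M.finsum_cong')
    show "(\<lambda>x. (c1 x \<oplus>\<^bsub>RR\<^esub> c2 x) \<odot>\<^bsub>M\<^esub> x) \<in> X \<rightarrow> carrier M"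
      using c1(1) c2(1) C assms(2) by (auto intro!: smult_closed)
    fix x assume x: "x \<in> X"
    have a: "c1 x \<in> carrier RR" using c1(1) C(1) x by blast
    have b: "c2 x \<in> carrier RR" using c2(1) C(1) x by blast
    have xc: "x \<in> carrier M" using x assms(2) by blast
    show "c1 x \<odot>\<^bsub>M\<^esub> x \<oplus>\<^bsub>M\<^esub> c2 x \<odot>\<^bsub>M\<^esub> x = (c1 x \<oplus>\<^bsub>RR\<^esub> c2 x) \<odot>\<^bsub>M\<^esub> x"
      using smult_l_distr[OF a b xc] by simp
  qed simp
  finally have eq: "y1 \<oplus>\<^bsub>M\<^esub> y2 = finsum M (\<lambda>x. (c1 x \<oplus>\<^bsub>RR\<^esub> c2 x) \<odot>\<^bsub>M\<^esub> x) X" .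
  have "(\<lambda>x. c1 x \<oplus>\<^bsub>RR\<^esub> c2 x) \<in> X \<rightarrow> C"
  proof (rule Pi_I)
    fix x assume x: "x \<in> X"
    have "c1 x \<in> C" "c2 x \<in> C" using c1(1) c2(1) x by blast+
    then show "c1 x \<oplus>\<^bsub>RR\<^esub> c2 x \<in> C" by (rule C(2))
  qed
  then show ?thesis using eq by (rule comb_memI)
qed

lemma comb_single:
  assumes "finite X" "X \<subseteq> carrier M" "addsub C" "x \<in> X" "a \<in> C"
  shows "a \<odot>\<^bsub>M\<^esub> x \<in> comb M C X"
proof -
  have C: "C \<subseteq> carrier RR" "\<zero>\<^bsub>RR\<^esub> \<in> C" using assms(3) unfolding addsub_def by auto
  define c where "c = (\<lambda>y. if y = x then a else \<zero>\<^bsub>RR\<^esub>)"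
  have cC: "c \<in> X \<rightarrow> C" using C assms(5) by (simp add: c_def)
  have X: "X = insert x (X - {x})" using assms(4) by auto
  have fc: "(\<lambda>y. c y \<odot>\<^bsub>M\<^esub> y) \<in> X \<rightarrow> carrier M" using cC C(1) assms(2) by blast
  have "finsum M (\<lambda>y. c y \<odot>\<^bsub>M\<^esub> y) X = c x \<odot>\<^bsub>M\<^esub> x \<oplus>\<^bsub>M\<^esub> finsum M (\<lambda>y. c y \<odot>\<^bsub>M\<^esub> y) (X - {x})"
    using fc assms(1,4) by (subst X, intro M.finsum_insert) auto
  also have "finsum M (\<lambda>y. c y \<odot>\<^bsub>M\<^esub> y) (X - {x}) = \<zero>\<^bsub>M\<^esub>"
    by (rule finsum_zero_fun) (use assms(1,2) in \<open>auto simp: c_def\<close>)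
  moreover have "c x \<odot>\<^bsub>M\<^esub> x \<in> carrier M" using fc assms(4) by blast
  ultimately have "finsum M (\<lambda>y. c y \<odot>\<^bsub>M\<^esub> y) X = a \<odot>\<^bsub>M\<^esub> x"
    by (simp add: c_def)
  then show ?thesis using cC by (intro comb_memI) auto
qed

lemma comb_smult:
  assumes "finite X" "X \<subseteq> carrier M" "C \<subseteq> carrier RR" "r \<in> carrier RR"
    "\<And>a. a \<in> C \<Longrightarrow> r \<otimes>\<^bsub>RR\<^esub> a \<in> C" "y \<in> comb M C X"
  shows "r \<odot>\<^bsub>M\<^esub> y \<in> comb M C X"
proof -
  obtain c where c: "c \<in> X \<rightarrow> C" "y = finsum M (\<lambda>x. c x \<odot>\<^bsub>M\<^esub> x) X"
    using assms(6) unfolding comb_def by blast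
  have fc: "(\<lambda>x. c x \<odot>\<^bsub>M\<^esub> x) \<in> X \<rightarrow> carrier M" using c(1) assms(2,3) by blast
  have "r \<odot>\<^bsub>M\<^esub> y = finsum M (\<lambda>x. r \<odot>\<^bsub>M\<^esub> (c x \<odot>\<^bsub>M\<^esub> x)) X"
    using c(2) finsum_smult_ldistr[OF assms(1,4) fc] by simp
  also have "\<dots> = finsum M (\<lambda>x. (r \<otimes>\<^bsub>RR\<^esub> c x) \<odot>\<^bsub>M\<^esub> x) X"
  proof (rule M.finsum_cong')
    show "(\<lambda>x. (r \<otimes>\<^bsub>RR\<^esub> c x) \<odot>\<^bsub>M\<^esub> x) \<in> X \<rightarrow> carrier M"
      using c(1) assms(2,3,4) by (auto intro!: smult_closed)
    fix x assume x: "x \<in> X"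
    have a: "c x \<in> carrier RR" using c(1) assms(3) x by blast
    have xc: "x \<in> carrier M" using x assms(2) by blast
    show "r \<odot>\<^bsub>M\<^esub> (c x \<odot>\<^bsub>M\<^esub> x) = (r \<otimes>\<^bsub>RR\<^esub> c x) \<odot>\<^bsub>M\<^esub> x"
      using smult_assoc1[OF assms(4) a xc] by simp
  qed simp
  finally have eq: "r \<odot>\<^bsub>M\<^esub> y = finsum M (\<lambda>x. (r \<otimes>\<^bsub>RR\<^esub> c x) \<odot>\<^bsub>M\<^esub> x) X" .
  have "(\<lambda>x. r \<otimes>\<^bsub>RR\<^esub> c x) \<in> X \<rightarrow> C"
  proof (rule Pi_I)
    fix x assume x: "x \<in> X"
    have "c x \<in> C" using c(1) x by blast
    then show "r \<otimes>\<^bsub>RR\<^esub> c x \<in> C" by (rule assms(5))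
  qed
  then show ?thesis using eq by (rule comb_memI)
qed

lemma comb_least:
  assumes "finite X" "S \<subseteq> carrier M" "\<zero>\<^bsub>M\<^esub> \<in> S" "\<And>a b. a \<in> S \<Longrightarrow> b \<in> S \<Longrightarrow> a \<oplus>\<^bsub>M\<^esub> b \<in> S"
    "\<And>x a. x \<in> X \<Longrightarrow> a \<in> C \<Longrightarrow> a \<odot>\<^bsub>M\<^esub> x \<in> S"
  shows "comb M C X \<subseteq> S"
proof
  fix y assume "y \<in> comb M C X"
  then obtain c where c: "c \<in> X \<rightarrow> C" "y = finsum M (\<lambda>x. c x \<odot>\<^bsub>M\<^esub> x) X"
    unfolding comb_def by blast
  have "(\<lambda>x. c x \<odot>\<^bsub>M\<^esub> x) \<in> X \<rightarrow> S"
  proof (rule Pi_I)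
    fix x assume "x \<in> X"
    moreover have "c x \<in> C" using c(1) \<open>x \<in> X\<close> by blast
    ultimately show "c x \<odot>\<^bsub>M\<^esub> x \<in> S" by (rule assms(5))
  qed
  then have "finsum M (\<lambda>x. c x \<odot>\<^bsub>M\<^esub> x) X \<in> S"
    using finsum_in[of X S "\<lambda>x. c x \<odot>\<^bsub>M\<^esub> x"] assms(1,2,3,4) by blast
  then show "y \<in> S" using c(2) by simp
qed

lemma comb_mono:
  assumes "X \<subseteq> Y" "finite Y" "Y \<subseteq> carrier M" "addsub C"
  shows "comb M C X \<subseteq> comb M C Y"
proof (rule comb_least)
  show "finite X" using assms(1,2) by (rule finite_subset)
  have C: "C \<subseteq> carrier RR" "\<zero>\<^bsub>RR\<^esub> \<in> C" using assms(4) unfolding addsub_def by auto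
  show "comb M C Y \<subseteq> carrier M" by (rule comb_carrier[OF assms(2,3) C(1)])
  show "\<zero>\<^bsub>M\<^esub> \<in> comb M C Y" by (rule comb_zero[OF assms(2,3) C(2)])
  show "a \<oplus>\<^bsub>M\<^esub> b \<in> comb M C Y" if "a \<in> comb M C Y" "b \<in> comb M C Y" for a b
    by (rule comb_add[OF assms(2,3,4) that])
  show "a \<odot>\<^bsub>M\<^esub> x \<in> comb M C Y" if "x \<in> X" "a \<in> C" for x a
    by (rule comb_single[OF assms(2,3,4)]) (use that assms(1) in auto)
qed

lemma psub_comb:
  assumes "finite X" "X \<subseteq> carrier M" "addsub C" "\<And>r a. r \<in> carrier RR \<Longrightarrow> a \<in> C \<Longrightarrow> r \<otimes>\<^bsub>RR\<^esub> a \<in> C"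
  shows "psub (comb M C X)"
  unfolding psub_def
proof (intro conjI ballI)
  have C: "C \<subseteq> carrier RR" "\<zero>\<^bsub>RR\<^esub> \<in> C" using assms(3) unfolding addsub_def by auto
  show "comb M C X \<subseteq> carrier M" by (rule comb_carrier[OF assms(1,2) C(1)])
  show "\<zero>\<^bsub>M\<^esub> \<in> comb M C X" by (rule comb_zero[OF assms(1,2) C(2)])
  show "a \<oplus>\<^bsub>M\<^esub> b \<in> comb M C X" if "a \<in> comb M C X" "b \<in> comb M C X" for a b
    using comb_add[OF assms(1,2,3) that] .
  show "r \<odot>\<^bsub>M\<^esub> a \<in> comb M C X" if "r \<in> carrier RR" "a \<in> comb M C X" for r a
    by (rule comb_smult[OF assms(1,2) C(1) that(1)]) (use assms(4) that in auto)
qed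

lemma ksub_Kcomb:
  assumes "finite X" "X \<subseteq> carrier M"
  shows "ksub (comb M KK X)"
  unfolding ksub_def
proof (intro conjI ballI allI)
  have C: "KK \<subseteq> carrier RR" "\<zero>\<^bsub>RR\<^esub> \<in> KK" using addsub_KK unfolding addsub_def by auto
  show "comb M KK X \<subseteq> carrier M" by (rule comb_carrier[OF assms(1,2) C(1)])
  show "\<zero>\<^bsub>M\<^esub> \<in> comb M KK X" by (rule comb_zero[OF assms(1,2) C(2)])
  show "a \<oplus>\<^bsub>M\<^esub> b \<in> comb M KK X" if "a \<in> comb M KK X" "b \<in> comb M KK X" for a b
    using comb_add[OF assms(1,2) addsub_KK that] .
  show "ps_const c \<odot>\<^bsub>M\<^esub> a \<in> comb M KK X" if "a \<in> comb M KK X" for a c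
    by (rule comb_smult[OF assms(1,2) C(1) ps_const_in]) (use that in \<open>auto simp: ps_const_mult[symmetric]\<close>)
qed

lemma psub_Pspan:
  assumes "finite X" "X \<subseteq> carrier M"
  shows "psub (comb M (carrier RR) X)"
  by (rule psub_comb[OF assms addsub_carrier]) simp

lemma psub_mspan:
  assumes "finite X" "X \<subseteq> carrier M"
  shows "psub (comb M mm X)"
  by (rule psub_comb[OF assms addsub_mm]) (rule msub_mult)

end

lemma lindep:
  fixes v :: "'i \<Rightarrow> 's \<Rightarrow> 'k::field"
  assumes "finite S" "finite I" "card S < card I"
  shows "\<exists>l. (\<exists>i\<in>I. l i \<noteq> 0) \<and> (\<forall>x\<in>S. (\<Sum>i\<in>I. l i * v i x) = 0)"
  using assms
proof (induction S arbitrary: I v rule: finite_induct)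
  case empty
  then have "I \<noteq> {}" by auto
  then obtain i where "i \<in> I" by blast
  then show ?case by (intro exI[of _ "\<lambda>_. 1"]) auto
next
  case (insert x S)
  show ?case
  proof (cases "\<forall>i\<in>I. v i x = 0")
    case True
    have "card S < card I" using insert by simp
    then obtain l where l: "\<exists>i\<in>I. l i \<noteq> 0" "\<forall>y\<in>S. (\<Sum>i\<in>I. l i * v i y) = 0"
      using insert.IH[OF insert.prems(1)] by blast
    have "(\<Sum>i\<in>I. l i * v i x) = 0" using True by simp
    then show ?thesis using l by (intro exI[of _ l]) auto
  next
    case False
    then obtain i0 where i0: "i0 \<in> I" "v i0 x \<noteq> 0" by blast
    define I' where "I' = I - {i0}"
    define w where "w = (\<lambda>i y. v i y - (v i x / v i0 x) * v i0 y)"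
    have fI': "finite I'" using insert.prems by (simp add: I'_def)
    have cI': "card I' = card I - 1" using i0 insert.prems by (simp add: I'_def)
    have "card S < card I'" using insert cI' by simp
    then obtain m where m: "\<exists>i\<in>I'. m i \<noteq> 0" "\<forall>y\<in>S. (\<Sum>i\<in>I'. m i * w i y) = 0"
      using insert.IH[OF fI'] by blast
    define l where "l = (\<lambda>i. if i = i0 then - (\<Sum>j\<in>I'. m j * v j x) / v i0 x else m i)"
    have I: "I = insert i0 I'" using i0 by (auto simp: I'_def)
    have i0I': "i0 \<notin> I'" by (simp add: I'_def)
    have sumI: "(\<Sum>i\<in>I. l i * v i y) = l i0 * v i0 y + (\<Sum>j\<in>I'. m j * v j y)" for y
    proof -
      have "(\<Sum>i\<in>I. l i * v i y) = l i0 * v i0 y + (\<Sum>j\<in>I'. l j * v j y)"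
        using fI' i0I' by (simp add: I)
      also have "(\<Sum>j\<in>I'. l j * v j y) = (\<Sum>j\<in>I'. m j * v j y)"
        by (rule sum.cong) (auto simp: l_def I'_def)
      finally show ?thesis .
    qed
    have "\<forall>y\<in>insert x S. (\<Sum>i\<in>I. l i * v i y) = 0"
    proof
      fix y assume y: "y \<in> insert x S"
      show "(\<Sum>i\<in>I. l i * v i y) = 0"
      proof (cases "y = x")
        case True
        have "(\<Sum>i\<in>I. l i * v i x) = 0" unfolding sumI using i0(2) by (simp add: l_def)
        then show ?thesis using True by simp
      next
        case False
        then have yS: "y \<in> S" using y by simp
        have "(\<Sum>j\<in>I'. m j * w j y) = (\<Sum>j\<in>I'. m j * v j y) - (\<Sum>j\<in>I'. m j * v j x) / v i0 x * v i0 y"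
          by (simp add: w_def algebra_simps sum_subtractf sum_distrib_left sum_distrib_right sum_divide_distrib)
        then have "(\<Sum>j\<in>I'. m j * v j y) = (\<Sum>j\<in>I'. m j * v j x) / v i0 x * v i0 y"
          using m(2) yS by simp
        then show ?thesis unfolding sumI using i0(2) by (simp add: l_def)
      qed
    qed
    moreover have "\<exists>i\<in>I. l i \<noteq> 0"
    proof -
      obtain j where j: "j \<in> I'" "m j \<noteq> 0" using m(1) by blast
      then have "j \<in> I" "l j = m j" by (auto simp: I'_def l_def)
      then show ?thesis using j(2) by (intro bexI[of _ j]) auto
    qed
    ultimately show ?thesis by blast
  qed
qed


context psm
begin

lemma ksubD:
  assumes "ksub W"
  shows "W \<subseteq> carrier M" "\<zero>\<^bsub>M\<^esub> \<in> W" "\<And>a b. a \<in> W \<Longrightarrow> b \<in> W \<Longrightarrow> a \<oplus>\<^bsub>M\<^esub> b \<in> W"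
    "\<And>c a. a \<in> W \<Longrightarrow> ps_const c \<odot>\<^bsub>M\<^esub> a \<in> W"
  using assms unfolding ksub_def by auto

lemma psubD:
  assumes "psub W"
  shows "W \<subseteq> carrier M" "\<zero>\<^bsub>M\<^esub> \<in> W" "\<And>a b. a \<in> W \<Longrightarrow> b \<in> W \<Longrightarrow> a \<oplus>\<^bsub>M\<^esub> b \<in> W"
    "\<And>r a. r \<in> carrier RR \<Longrightarrow> a \<in> W \<Longrightarrow> r \<odot>\<^bsub>M\<^esub> a \<in> W"
  using assms unfolding psub_def by auto

lemma ksubI:
  assumes "W \<subseteq> carrier M" "\<zero>\<^bsub>M\<^esub> \<in> W" "\<And>a b. a \<in> W \<Longrightarrow> b \<in> W \<Longrightarrow> a \<oplus>\<^bsub>M\<^esub> b \<in> W"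
    "\<And>c a. a \<in> W \<Longrightarrow> ps_const c \<odot>\<^bsub>M\<^esub> a \<in> W"
  shows "ksub W"
  using assms unfolding ksub_def by auto

lemma psubI:
  assumes "W \<subseteq> carrier M" "\<zero>\<^bsub>M\<^esub> \<in> W" "\<And>a b. a \<in> W \<Longrightarrow> b \<in> W \<Longrightarrow> a \<oplus>\<^bsub>M\<^esub> b \<in> W"
    "\<And>r a. r \<in> carrier RR \<Longrightarrow> a \<in> W \<Longrightarrow> r \<odot>\<^bsub>M\<^esub> a \<in> W"
  shows "psub W"
  using assms unfolding psub_def by auto

lemma const_smult_combine:
  assumes "v \<in> carrier M"
  shows "ps_const a \<odot>\<^bsub>M\<^esub> v \<oplus>\<^bsub>M\<^esub> ps_const b \<odot>\<^bsub>M\<^esub> v = ps_const (a + b) \<odot>\<^bsub>M\<^esub> v"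
    "ps_const a \<odot>\<^bsub>M\<^esub> (ps_const b \<odot>\<^bsub>M\<^esub> v) = ps_const (a * b) \<odot>\<^bsub>M\<^esub> v"
    "ps_const 0 \<odot>\<^bsub>M\<^esub> v = \<zero>\<^bsub>M\<^esub>"
    "ps_const 1 \<odot>\<^bsub>M\<^esub> v = v"
    "ps_const (-1) \<odot>\<^bsub>M\<^esub> v = \<ominus>\<^bsub>M\<^esub> v"
proof -
  show "ps_const a \<odot>\<^bsub>M\<^esub> v \<oplus>\<^bsub>M\<^esub> ps_const b \<odot>\<^bsub>M\<^esub> v = ps_const (a + b) \<odot>\<^bsub>M\<^esub> v"
    using smult_l_distr[OF ps_const_in ps_const_in assms] by (simp add: ps_const_add)
  show "ps_const a \<odot>\<^bsub>M\<^esub> (ps_const b \<odot>\<^bsub>M\<^esub> v) = ps_const (a * b) \<odot>\<^bsub>M\<^esub> v"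
    using smult_assoc1[OF ps_const_in ps_const_in assms] by (simp add: ps_const_mult)
  show "ps_const 0 \<odot>\<^bsub>M\<^esub> v = \<zero>\<^bsub>M\<^esub>" using assms by (simp add: ps_const_zero)
  show "ps_const 1 \<odot>\<^bsub>M\<^esub> v = v" using assms by (simp add: ps_const_one)
  show "ps_const (-1) \<odot>\<^bsub>M\<^esub> v = \<ominus>\<^bsub>M\<^esub> v"
    using smult_l_minus[OF R.one_closed assms] assms by (simp add: ps_const_uminus ps_const_one)
qed

lemma ksub_minus:
  assumes "ksub W" "a \<in> W" "b \<in> W"
  shows "a \<ominus>\<^bsub>M\<^esub> b \<in> W" "\<ominus>\<^bsub>M\<^esub> b \<in> W"
proof -
  have bc: "b \<in> carrier M" using assms ksubD(1) by blast
  have "ps_const (-1) \<odot>\<^bsub>M\<^esub> b \<in> W" using ksubD(4)[OF assms(1) assms(3)] .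
  then show nb: "\<ominus>\<^bsub>M\<^esub> b \<in> W" using const_smult_combine(5)[OF bc] by simp
  show "a \<ominus>\<^bsub>M\<^esub> b \<in> W" unfolding a_minus_def using ksubD(3)[OF assms(1) assms(2) nb] .
qed

lemma sumset_carrier:
  assumes "A \<subseteq> carrier M" "B \<subseteq> carrier M"
  shows "sumset M A B \<subseteq> carrier M"
  using assms unfolding sumset_def by auto

lemma sumsetI: "a \<in> A \<Longrightarrow> b \<in> B \<Longrightarrow> a \<oplus>\<^bsub>M\<^esub> b \<in> sumset M A B"
  unfolding sumset_def by blast

lemma sumsetE:
  assumes "y \<in> sumset M A B"
  obtains a b where "a \<in> A" "b \<in> B" "y = a \<oplus>\<^bsub>M\<^esub> b"
  using assms unfolding sumset_def by blast

lemma add4: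
  assumes "a1 \<in> carrier M" "b1 \<in> carrier M" "a2 \<in> carrier M" "b2 \<in> carrier M"
  shows "(a1 \<oplus>\<^bsub>M\<^esub> b1) \<oplus>\<^bsub>M\<^esub> (a2 \<oplus>\<^bsub>M\<^esub> b2) = (a1 \<oplus>\<^bsub>M\<^esub> a2) \<oplus>\<^bsub>M\<^esub> (b1 \<oplus>\<^bsub>M\<^esub> b2)"
  using assms by (simp add: M.a_ac)

lemma ksub_sumset:
  assumes "ksub A" "ksub B"
  shows "ksub (sumset M A B)"
proof (rule ksubI)
  note A = ksubD[OF assms(1)] and B = ksubD[OF assms(2)]
  show "sumset M A B \<subseteq> carrier M" by (rule sumset_carrier[OF A(1) B(1)])
  show "\<zero>\<^bsub>M\<^esub> \<in> sumset M A B"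
    using sumsetI[OF A(2) B(2)] by simp
  show "a \<oplus>\<^bsub>M\<^esub> b \<in> sumset M A B" if hh: "a \<in> sumset M A B" "b \<in> sumset M A B" for a b
  proof -
    obtain a1 b1 where 1: "a1 \<in> A" "b1 \<in> B" "a = a1 \<oplus>\<^bsub>M\<^esub> b1" using hh(1) by (rule sumsetE)
    obtain a2 b2 where 2: "a2 \<in> A" "b2 \<in> B" "b = a2 \<oplus>\<^bsub>M\<^esub> b2" using hh(2) by (rule sumsetE)
    have "a \<oplus>\<^bsub>M\<^esub> b = (a1 \<oplus>\<^bsub>M\<^esub> a2) \<oplus>\<^bsub>M\<^esub> (b1 \<oplus>\<^bsub>M\<^esub> b2)"
      using 1 2 A(1) B(1) by (simp add: add4 subsetD)
    then show ?thesis using sumsetI[OF A(3)[OF 1(1) 2(1)] B(3)[OF 1(2) 2(2)]] by simp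
  qed
  show "ps_const c \<odot>\<^bsub>M\<^esub> a \<in> sumset M A B" if hh: "a \<in> sumset M A B" for c a
  proof -
    obtain a1 b1 where 1: "a1 \<in> A" "b1 \<in> B" "a = a1 \<oplus>\<^bsub>M\<^esub> b1" using hh(1) by (rule sumsetE)
    have "ps_const c \<odot>\<^bsub>M\<^esub> a = ps_const c \<odot>\<^bsub>M\<^esub> a1 \<oplus>\<^bsub>M\<^esub> ps_const c \<odot>\<^bsub>M\<^esub> b1"
      using 1 A(1) B(1) by (simp add: smult_r_distr subsetD)
    then show ?thesis using sumsetI[OF A(4)[OF 1(1)] B(4)[OF 1(2)]] by simp
  qed
qed

lemma psub_sumset:
  assumes "psub A" "psub B"
  shows "psub (sumset M A B)"
proof (rule psubI)
  note A = psubD[OF assms(1)] and B = psubD[OF assms(2)]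
  show "sumset M A B \<subseteq> carrier M" by (rule sumset_carrier[OF A(1) B(1)])
  show "\<zero>\<^bsub>M\<^esub> \<in> sumset M A B"
    using sumsetI[OF A(2) B(2)] by simp
  show "a \<oplus>\<^bsub>M\<^esub> b \<in> sumset M A B" if hh: "a \<in> sumset M A B" "b \<in> sumset M A B" for a b
  proof -
    obtain a1 b1 where 1: "a1 \<in> A" "b1 \<in> B" "a = a1 \<oplus>\<^bsub>M\<^esub> b1" using hh(1) by (rule sumsetE)
    obtain a2 b2 where 2: "a2 \<in> A" "b2 \<in> B" "b = a2 \<oplus>\<^bsub>M\<^esub> b2" using hh(2) by (rule sumsetE)
    have "a \<oplus>\<^bsub>M\<^esub> b = (a1 \<oplus>\<^bsub>M\<^esub> a2) \<oplus>\<^bsub>M\<^esub> (b1 \<oplus>\<^bsub>M\<^esub> b2)"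
      using 1 2 A(1) B(1) by (simp add: add4 subsetD)
    then show ?thesis using sumsetI[OF A(3)[OF 1(1) 2(1)] B(3)[OF 1(2) 2(2)]] by simp
  qed
  show "r \<odot>\<^bsub>M\<^esub> a \<in> sumset M A B" if hh: "r \<in> carrier RR" "a \<in> sumset M A B" for r a
  proof -
    obtain a1 b1 where 1: "a1 \<in> A" "b1 \<in> B" "a = a1 \<oplus>\<^bsub>M\<^esub> b1" using hh(2) by (rule sumsetE)
    have "r \<odot>\<^bsub>M\<^esub> a = r \<odot>\<^bsub>M\<^esub> a1 \<oplus>\<^bsub>M\<^esub> r \<odot>\<^bsub>M\<^esub> b1"
      using 1 A(1) B(1) hh(1) by (simp add: smult_r_distr subsetD)
    then show ?thesis using sumsetI[OF A(4)[OF hh(1) 1(1)] B(4)[OF hh(1) 1(2)]] by simp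
  qed
qed

lemma sumset_left:
  assumes "A \<subseteq> carrier M" "\<zero>\<^bsub>M\<^esub> \<in> B"
  shows "A \<subseteq> sumset M A B"
proof
  fix a assume "a \<in> A"
  then have "a = a \<oplus>\<^bsub>M\<^esub> \<zero>\<^bsub>M\<^esub>" using assms(1) by auto
  then show "a \<in> sumset M A B" using sumsetI[OF \<open>a \<in> A\<close> assms(2)] by simp
qed

lemma sumset_right:
  assumes "B \<subseteq> carrier M" "\<zero>\<^bsub>M\<^esub> \<in> A"
  shows "B \<subseteq> sumset M A B"
proof
  fix b assume "b \<in> B"
  then have "b = \<zero>\<^bsub>M\<^esub> \<oplus>\<^bsub>M\<^esub> b" using assms(1) by auto
  then show "b \<in> sumset M A B" using sumsetI[OF assms(2) \<open>b \<in> B\<close>] by simp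
qed

lemma sumset_least:
  assumes "ksub W" "A \<subseteq> W" "B \<subseteq> W"
  shows "sumset M A B \<subseteq> W"
proof
  fix y assume "y \<in> sumset M A B"
  then obtain a b where "a \<in> A" "b \<in> B" "y = a \<oplus>\<^bsub>M\<^esub> b" by (rule sumsetE)
  then show "y \<in> W" using ksubD(3)[OF assms(1)] assms(2,3) by blast
qed

lemma sumset_mono:
  assumes "A \<subseteq> A'" "B \<subseteq> B'"
  shows "sumset M A B \<subseteq> sumset M A' B'"
  using assms unfolding sumset_def by blast

lemma Kcomb_least:
  assumes "finite X" "ksub W" "X \<subseteq> W"
  shows "comb M KK X \<subseteq> W"
proof (rule comb_least[OF assms(1)])
  note W = ksubD[OF assms(2)]
  show "W \<subseteq> carrier M" "\<zero>\<^bsub>M\<^esub> \<in> W" by (rule W(1), rule W(2))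
  show "a \<oplus>\<^bsub>M\<^esub> b \<in> W" if "a \<in> W" "b \<in> W" for a b using W(3) that .
  show "a \<odot>\<^bsub>M\<^esub> x \<in> W" if hh: "x \<in> X" "a \<in> KK" for x a
  proof -
    obtain c where "a = ps_const c" using hh(2) by blast
    then show ?thesis using W(4) hh(1) assms(3) by blast
  qed
qed

lemma Kcomb_in:
  assumes "finite X" "X \<subseteq> carrier M"
  shows "finsum M (\<lambda>x. ps_const (c x) \<odot>\<^bsub>M\<^esub> x) X \<in> comb M KK X"
  by (rule comb_memI[of "\<lambda>x. ps_const (c x)"]) auto

lemma Kcomb_coord:
  assumes "y \<in> comb M KK X" "X \<subseteq> carrier M"
  shows "\<exists>c. y = finsum M (\<lambda>x. ps_const (c x) \<odot>\<^bsub>M\<^esub> x) X"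
proof -
  obtain c' where c': "c' \<in> X \<rightarrow> KK" "y = finsum M (\<lambda>x. c' x \<odot>\<^bsub>M\<^esub> x) X"
    using assms(1) unfolding comb_def by blast
  define c where "c = (\<lambda>x. SOME a. c' x = ps_const a)"
  have cc: "c' x = ps_const (c x)" if "x \<in> X" for x
  proof -
    have "\<exists>a. c' x = ps_const a" using c'(1) that by blast
    then show ?thesis unfolding c_def by (rule someI_ex)
  qed
  have "finsum M (\<lambda>x. c' x \<odot>\<^bsub>M\<^esub> x) X = finsum M (\<lambda>x. ps_const (c x) \<odot>\<^bsub>M\<^esub> x) X"
  proof (rule M.finsum_cong')
    show "(\<lambda>x. ps_const (c x) \<odot>\<^bsub>M\<^esub> x) \<in> X \<rightarrow> carrier M" using assms(2) by auto
    show "c' x \<odot>\<^bsub>M\<^esub> x = ps_const (c x) \<odot>\<^bsub>M\<^esub> x" if "x \<in> X" for x using cc[OF that] by simp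
  qed simp
  then show ?thesis using c'(2) by blast
qed

lemma psub_tsub: "psub (tsub M t0)"
proof (rule psubI)
  let ?t = "ps_t_minus t0"
  show "tsub M t0 \<subseteq> carrier M" unfolding tsub_def by auto
  show "\<zero>\<^bsub>M\<^esub> \<in> tsub M t0"
    unfolding tsub_def using smult_r_null[OF ps_t_minus_in, of t0] M.zero_closed by force
  show "a \<oplus>\<^bsub>M\<^esub> b \<in> tsub M t0" if hh: "a \<in> tsub M t0" "b \<in> tsub M t0" for a b
  proof -
    obtain m1 where 1: "m1 \<in> carrier M" "a = ?t \<odot>\<^bsub>M\<^esub> m1" using hh(1) unfolding tsub_def by blast
    obtain m2 where 2: "m2 \<in> carrier M" "b = ?t \<odot>\<^bsub>M\<^esub> m2" using hh(2) unfolding tsub_def by blast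
    have "a \<oplus>\<^bsub>M\<^esub> b = ?t \<odot>\<^bsub>M\<^esub> (m1 \<oplus>\<^bsub>M\<^esub> m2)" using 1 2 by (simp add: smult_r_distr)
    moreover have "m1 \<oplus>\<^bsub>M\<^esub> m2 \<in> carrier M" using 1 2 by simp
    ultimately show ?thesis unfolding tsub_def by blast
  qed
  show "r \<odot>\<^bsub>M\<^esub> a \<in> tsub M t0" if hh: "r \<in> carrier RR" "a \<in> tsub M t0" for r a
  proof -
    obtain m1 where 1: "m1 \<in> carrier M" "a = ?t \<odot>\<^bsub>M\<^esub> m1" using hh(2) unfolding tsub_def by blast
    have "r \<odot>\<^bsub>M\<^esub> a = (r \<otimes>\<^bsub>RR\<^esub> ?t) \<odot>\<^bsub>M\<^esub> m1" using 1 hh(1) by (simp add: smult_assoc1)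
    also have "\<dots> = (?t \<otimes>\<^bsub>RR\<^esub> r) \<odot>\<^bsub>M\<^esub> m1" using hh(1) by (simp add: R.m_comm)
    also have "\<dots> = ?t \<odot>\<^bsub>M\<^esub> (r \<odot>\<^bsub>M\<^esub> m1)" using 1 hh(1) by (simp add: smult_assoc1)
    finally show ?thesis using 1 hh(1) unfolding tsub_def by blast
  qed
qed

lemma spans_fiber_iff:
  "spans_fiber M t0 B \<longleftrightarrow> finite B \<and> B \<subseteq> carrier M \<and> carrier M \<subseteq> sumset M (comb M KK B) (tsub M t0)"
proof
  assume sp: "spans_fiber M t0 B"
  then have B: "finite B" "B \<subseteq> carrier M" unfolding spans_fiber_def by auto
  have "m \<in> sumset M (comb M KK B) (tsub M t0)" if m: "m \<in> carrier M" for m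
  proof -
    obtain c where c: "m \<ominus>\<^bsub>M\<^esub> finsum M (\<lambda>b. ps_const (c b) \<odot>\<^bsub>M\<^esub> b) B \<in> tsub M t0"
      using sp m unfolding spans_fiber_def by blast
    let ?k = "finsum M (\<lambda>b. ps_const (c b) \<odot>\<^bsub>M\<^esub> b) B"
    have k: "?k \<in> comb M KK B" by (rule Kcomb_in[OF B])
    have kc: "?k \<in> carrier M" using B by (intro M.finsum_closed) auto
    have "m = ?k \<oplus>\<^bsub>M\<^esub> (m \<ominus>\<^bsub>M\<^esub> ?k)" using kc m
      by (simp add: a_minus_def M.a_lcomm M.r_neg)
    then show ?thesis using sumsetI[OF k c] by simp
  qed
  then show "finite B \<and> B \<subseteq> carrier M \<and> carrier M \<subseteq> sumset M (comb M KK B) (tsub M t0)"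
    using B by blast
next
  assume h: "finite B \<and> B \<subseteq> carrier M \<and> carrier M \<subseteq> sumset M (comb M KK B) (tsub M t0)"
  have "\<exists>c. m \<ominus>\<^bsub>M\<^esub> finsum M (\<lambda>b. ps_const (c b) \<odot>\<^bsub>M\<^esub> b) B \<in> tsub M t0" if m: "m \<in> carrier M" for m
  proof -
    have "m \<in> sumset M (comb M KK B) (tsub M t0)" using h m by blast
    then obtain k z where kz: "k \<in> comb M KK B" "z \<in> tsub M t0" "m = k \<oplus>\<^bsub>M\<^esub> z"
      by (rule sumsetE)
    obtain c where c: "k = finsum M (\<lambda>b. ps_const (c b) \<odot>\<^bsub>M\<^esub> b) B"
      using Kcomb_coord[OF kz(1)] h by blast
    have "comb M KK B \<subseteq> carrier M" using h by (intro comb_carrier) auto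
    then have kc: "k \<in> carrier M" using kz(1) by blast
    have zc: "z \<in> carrier M" using kz(2) psubD(1)[OF psub_tsub] by blast
    have "m \<ominus>\<^bsub>M\<^esub> k = z" unfolding kz(3) using kc zc
      by (simp add: a_minus_def M.a_comm[of k z] M.a_assoc M.r_neg)
    then show ?thesis using kz(2) c by blast
  qed
  then show "spans_fiber M t0 B" unfolding spans_fiber_def using h by blast
qed

end

context psm
begin

lemma ksum_add:
  assumes "finite J" "x \<in> J \<rightarrow> carrier M"
  shows "finsum M (\<lambda>j. ps_const (c j) \<odot>\<^bsub>M\<^esub> x j) J \<oplus>\<^bsub>M\<^esub> finsum M (\<lambda>j. ps_const (d j) \<odot>\<^bsub>M\<^esub> x j) J
       = finsum M (\<lambda>j. ps_const (c j + d j) \<odot>\<^bsub>M\<^esub> x j) J"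
proof -
  have f1: "(\<lambda>j. ps_const (c j) \<odot>\<^bsub>M\<^esub> x j) \<in> J \<rightarrow> carrier M" using assms(2) by auto
  have f2: "(\<lambda>j. ps_const (d j) \<odot>\<^bsub>M\<^esub> x j) \<in> J \<rightarrow> carrier M" using assms(2) by auto
  have "finsum M (\<lambda>j. ps_const (c j) \<odot>\<^bsub>M\<^esub> x j) J \<oplus>\<^bsub>M\<^esub> finsum M (\<lambda>j. ps_const (d j) \<odot>\<^bsub>M\<^esub> x j) J
     = finsum M (\<lambda>j. ps_const (c j) \<odot>\<^bsub>M\<^esub> x j \<oplus>\<^bsub>M\<^esub> ps_const (d j) \<odot>\<^bsub>M\<^esub> x j) J"
    using M.finsum_addf[OF f1 f2] by simp
  also have "\<dots> = finsum M (\<lambda>j. ps_const (c j + d j) \<odot>\<^bsub>M\<^esub> x j) J"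
  proof (rule M.finsum_cong')
    show "(\<lambda>j. ps_const (c j + d j) \<odot>\<^bsub>M\<^esub> x j) \<in> J \<rightarrow> carrier M" using assms(2) by auto
    show "ps_const (c j) \<odot>\<^bsub>M\<^esub> x j \<oplus>\<^bsub>M\<^esub> ps_const (d j) \<odot>\<^bsub>M\<^esub> x j = ps_const (c j + d j) \<odot>\<^bsub>M\<^esub> x j"
      if "j \<in> J" for j
      using const_smult_combine(1)[of "x j"] that assms(2) by blast
  qed simp
  finally show ?thesis .
qed

lemma ksum_scale:
  assumes "finite J" "x \<in> J \<rightarrow> carrier M"
  shows "ps_const a \<odot>\<^bsub>M\<^esub> finsum M (\<lambda>j. ps_const (c j) \<odot>\<^bsub>M\<^esub> x j) J
       = finsum M (\<lambda>j. ps_const (a * c j) \<odot>\<^bsub>M\<^esub> x j) J"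
proof -
  have f1: "(\<lambda>j. ps_const (c j) \<odot>\<^bsub>M\<^esub> x j) \<in> J \<rightarrow> carrier M" using assms(2) by auto
  have "ps_const a \<odot>\<^bsub>M\<^esub> finsum M (\<lambda>j. ps_const (c j) \<odot>\<^bsub>M\<^esub> x j) J
     = finsum M (\<lambda>j. ps_const a \<odot>\<^bsub>M\<^esub> (ps_const (c j) \<odot>\<^bsub>M\<^esub> x j)) J"
    by (rule finsum_smult_ldistr[OF assms(1) ps_const_in f1])
  also have "\<dots> = finsum M (\<lambda>j. ps_const (a * c j) \<odot>\<^bsub>M\<^esub> x j) J"
  proof (rule M.finsum_cong')
    show "(\<lambda>j. ps_const (a * c j) \<odot>\<^bsub>M\<^esub> x j) \<in> J \<rightarrow> carrier M" using assms(2) by auto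
    show "ps_const a \<odot>\<^bsub>M\<^esub> (ps_const (c j) \<odot>\<^bsub>M\<^esub> x j) = ps_const (a * c j) \<odot>\<^bsub>M\<^esub> x j"
      if "j \<in> J" for j
      using const_smult_combine(2)[of "x j"] that assms(2) by blast
  qed simp
  finally show ?thesis .
qed

lemma ksum_zero:
  assumes "finite J" "x \<in> J \<rightarrow> carrier M" "\<And>j. j \<in> J \<Longrightarrow> c j = 0"
  shows "finsum M (\<lambda>j. ps_const (c j) \<odot>\<^bsub>M\<^esub> x j) J = \<zero>\<^bsub>M\<^esub>"
proof (rule finsum_zero_fun[OF assms(1)])
  fix j assume j: "j \<in> J"
  then have "x j \<in> carrier M" using assms(2) by blast
  then show "ps_const (c j) \<odot>\<^bsub>M\<^esub> x j = \<zero>\<^bsub>M\<^esub>" using const_smult_combine(3) assms(3)[OF j] by simp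
qed

lemma ksum_closed:
  assumes "x \<in> J \<rightarrow> carrier M"
  shows "finsum M (\<lambda>j. ps_const (c j) \<odot>\<^bsub>M\<^esub> x j) J \<in> carrier M"
  using assms by (intro M.finsum_closed) auto

lemma LIN:
  assumes "finite I" "finite J" "x \<in> J \<rightarrow> carrier M"
  shows "finsum M (\<lambda>i. ps_const (a i) \<odot>\<^bsub>M\<^esub> finsum M (\<lambda>j. ps_const (b i j) \<odot>\<^bsub>M\<^esub> x j) J) I
       = finsum M (\<lambda>j. ps_const (\<Sum>i\<in>I. a i * b i j) \<odot>\<^bsub>M\<^esub> x j) J"
  using assms(1)
proof (induction I rule: finite_induct)
  case empty
  have "finsum M (\<lambda>j. ps_const (\<Sum>i\<in>{}. a i * b i j) \<odot>\<^bsub>M\<^esub> x j) J = \<zero>\<^bsub>M\<^esub>"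
    by (rule ksum_zero[OF assms(2,3)]) simp
  then show ?case by simp
next
  case (insert i I)
  have cl: "(\<lambda>i. ps_const (a i) \<odot>\<^bsub>M\<^esub> finsum M (\<lambda>j. ps_const (b i j) \<odot>\<^bsub>M\<^esub> x j) J) \<in> insert i I \<rightarrow> carrier M"
    using ksum_closed[OF assms(3)] by auto
  have "finsum M (\<lambda>i. ps_const (a i) \<odot>\<^bsub>M\<^esub> finsum M (\<lambda>j. ps_const (b i j) \<odot>\<^bsub>M\<^esub> x j) J) (insert i I)
      = ps_const (a i) \<odot>\<^bsub>M\<^esub> finsum M (\<lambda>j. ps_const (b i j) \<odot>\<^bsub>M\<^esub> x j) J \<oplus>\<^bsub>M\<^esub>
        finsum M (\<lambda>i. ps_const (a i) \<odot>\<^bsub>M\<^esub> finsum M (\<lambda>j. ps_const (b i j) \<odot>\<^bsub>M\<^esub> x j) J) I"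
    using cl insert.hyps by (intro M.finsum_insert) auto
  also have "\<dots> = finsum M (\<lambda>j. ps_const (a i * b i j) \<odot>\<^bsub>M\<^esub> x j) J \<oplus>\<^bsub>M\<^esub>
        finsum M (\<lambda>j. ps_const (\<Sum>i\<in>I. a i * b i j) \<odot>\<^bsub>M\<^esub> x j) J"
    using insert.IH ksum_scale[OF assms(2,3)] by simp
  also have "\<dots> = finsum M (\<lambda>j. ps_const (a i * b i j + (\<Sum>i\<in>I. a i * b i j)) \<odot>\<^bsub>M\<^esub> x j) J"
    by (rule ksum_add[OF assms(2,3)])
  also have "\<dots> = finsum M (\<lambda>j. ps_const (\<Sum>i\<in>insert i I. a i * b i j) \<odot>\<^bsub>M\<^esub> x j) J"
    using insert.hyps by simp
  finally show ?case .
qed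

lemma DEP:
  assumes Z: "ksub Z" and X: "finite X" "X \<subseteq> carrier M"
    and Y: "finite Y" "Y \<subseteq> sumset M (comb M KK X) Z" and card: "card X < card Y"
  shows "\<exists>l. (\<exists>y\<in>Y. l y \<noteq> 0) \<and> finsum M (\<lambda>y. ps_const (l y) \<odot>\<^bsub>M\<^esub> y) Y \<in> Z"
proof -
  note Zs = ksubD[OF Z]
  have "\<exists>cz. snd cz \<in> Z \<and> y = finsum M (\<lambda>x. ps_const (fst cz x) \<odot>\<^bsub>M\<^esub> x) X \<oplus>\<^bsub>M\<^esub> snd cz"
    if y: "y \<in> Y" for y
  proof -
    have "y \<in> sumset M (comb M KK X) Z" using Y(2) y by blast
    then obtain k z where kz: "k \<in> comb M KK X" "z \<in> Z" "y = k \<oplus>\<^bsub>M\<^esub> z" by (rule sumsetE)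
    obtain c where "k = finsum M (\<lambda>x. ps_const (c x) \<odot>\<^bsub>M\<^esub> x) X" using Kcomb_coord[OF kz(1) X(2)] by blast
    then show ?thesis using kz by (intro exI[of _ "(c, z)"]) simp
  qed
  then have ex: "\<forall>y\<in>Y. \<exists>cz. snd cz \<in> Z \<and> y = finsum M (\<lambda>x. ps_const (fst cz x) \<odot>\<^bsub>M\<^esub> x) X \<oplus>\<^bsub>M\<^esub> snd cz"
    by blast
  obtain cz where cz0: "\<forall>y\<in>Y. snd (cz y) \<in> Z \<and>
      y = finsum M (\<lambda>x. ps_const (fst (cz y) x) \<odot>\<^bsub>M\<^esub> x) X \<oplus>\<^bsub>M\<^esub> snd (cz y)"
    using bchoice[OF ex] by (elim exE)
  have cz: "snd (cz y) \<in> Z \<and>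
      y = finsum M (\<lambda>x. ps_const (fst (cz y) x) \<odot>\<^bsub>M\<^esub> x) X \<oplus>\<^bsub>M\<^esub> snd (cz y)" if "y \<in> Y" for y
    using cz0 that by (rule bspec)
  define cf where "cf = (\<lambda>y. fst (cz y))"
  define zf where "zf = (\<lambda>y. snd (cz y))"
  have zf: "zf y \<in> Z" if "y \<in> Y" for y using cz[OF that] by (simp add: zf_def)
  have yrep: "y = finsum M (\<lambda>x. ps_const (cf y x) \<odot>\<^bsub>M\<^esub> x) X \<oplus>\<^bsub>M\<^esub> zf y" if "y \<in> Y" for y
    using cz[OF that] by (simp add: zf_def cf_def)
  have xc: "(\<lambda>x. x) \<in> X \<rightarrow> carrier M" using X(2) by auto
  have zfc: "zf y \<in> carrier M" if "y \<in> Y" for y using zf[OF that] Zs(1) by blast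
  obtain l where l: "\<exists>y\<in>Y. l y \<noteq> 0" "\<forall>x\<in>X. (\<Sum>y\<in>Y. l y * cf y x) = 0"
    using lindep[OF X(1) Y(1) card, of cf] by blast
  have "finsum M (\<lambda>y. ps_const (l y) \<odot>\<^bsub>M\<^esub> y) Y
      = finsum M (\<lambda>y. ps_const (l y) \<odot>\<^bsub>M\<^esub> finsum M (\<lambda>x. ps_const (cf y x) \<odot>\<^bsub>M\<^esub> x) X
          \<oplus>\<^bsub>M\<^esub> ps_const (l y) \<odot>\<^bsub>M\<^esub> zf y) Y"
  proof (rule M.finsum_cong')
    show "(\<lambda>y. ps_const (l y) \<odot>\<^bsub>M\<^esub> finsum M (\<lambda>x. ps_const (cf y x) \<odot>\<^bsub>M\<^esub> x) X
          \<oplus>\<^bsub>M\<^esub> ps_const (l y) \<odot>\<^bsub>M\<^esub> zf y) \<in> Y \<rightarrow> carrier M"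
      using ksum_closed[OF xc] zfc by auto
    show "ps_const (l y) \<odot>\<^bsub>M\<^esub> y = ps_const (l y) \<odot>\<^bsub>M\<^esub> finsum M (\<lambda>x. ps_const (cf y x) \<odot>\<^bsub>M\<^esub> x) X
          \<oplus>\<^bsub>M\<^esub> ps_const (l y) \<odot>\<^bsub>M\<^esub> zf y" if y: "y \<in> Y" for y
    proof -
      have "ps_const (l y) \<odot>\<^bsub>M\<^esub> y = ps_const (l y) \<odot>\<^bsub>M\<^esub> (finsum M (\<lambda>x. ps_const (cf y x) \<odot>\<^bsub>M\<^esub> x) X \<oplus>\<^bsub>M\<^esub> zf y)"
        using yrep[OF y] by simp
      also have "\<dots> = ps_const (l y) \<odot>\<^bsub>M\<^esub> finsum M (\<lambda>x. ps_const (cf y x) \<odot>\<^bsub>M\<^esub> x) X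
          \<oplus>\<^bsub>M\<^esub> ps_const (l y) \<odot>\<^bsub>M\<^esub> zf y"
        by (rule smult_r_distr[OF ps_const_in ksum_closed[OF xc] zfc[OF y]])
      finally show ?thesis .
    qed
  qed simp
  also have "\<dots> = finsum M (\<lambda>y. ps_const (l y) \<odot>\<^bsub>M\<^esub> finsum M (\<lambda>x. ps_const (cf y x) \<odot>\<^bsub>M\<^esub> x) X) Y
      \<oplus>\<^bsub>M\<^esub> finsum M (\<lambda>y. ps_const (l y) \<odot>\<^bsub>M\<^esub> zf y) Y"
    by (rule M.finsum_addf) (use ksum_closed[OF xc] zfc in auto)
  also have "finsum M (\<lambda>y. ps_const (l y) \<odot>\<^bsub>M\<^esub> finsum M (\<lambda>x. ps_const (cf y x) \<odot>\<^bsub>M\<^esub> x) X) Y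
      = finsum M (\<lambda>x. ps_const (\<Sum>y\<in>Y. l y * cf y x) \<odot>\<^bsub>M\<^esub> x) X"
    by (rule LIN[OF Y(1) X(1) xc])
  also have "\<dots> = \<zero>\<^bsub>M\<^esub>"
    by (rule ksum_zero[OF X(1) xc]) (use l(2) in blast)
  finally have eq: "finsum M (\<lambda>y. ps_const (l y) \<odot>\<^bsub>M\<^esub> y) Y = \<zero>\<^bsub>M\<^esub> \<oplus>\<^bsub>M\<^esub> finsum M (\<lambda>y. ps_const (l y) \<odot>\<^bsub>M\<^esub> zf y) Y" .
  have pi: "(\<lambda>y. ps_const (l y) \<odot>\<^bsub>M\<^esub> zf y) \<in> Y \<rightarrow> Z"
  proof (rule Pi_I)
    fix y assume "y \<in> Y"
    then show "ps_const (l y) \<odot>\<^bsub>M\<^esub> zf y \<in> Z" using zf Zs(4) by blast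
  qed
  have "finsum M (\<lambda>y. ps_const (l y) \<odot>\<^bsub>M\<^esub> zf y) Y \<in> Z"
    using finsum_in[of Y Z "\<lambda>y. ps_const (l y) \<odot>\<^bsub>M\<^esub> zf y"] Y(1) Zs(1,2,3) pi by blast
  moreover then have "finsum M (\<lambda>y. ps_const (l y) \<odot>\<^bsub>M\<^esub> zf y) Y \<in> carrier M" using Zs(1) by blast
  ultimately have "finsum M (\<lambda>y. ps_const (l y) \<odot>\<^bsub>M\<^esub> y) Y \<in> Z" using eq by simp
  then show ?thesis using l(1) by blast
qed

lemma DROP:
  assumes Z: "ksub Z" and Y: "finite Y" "Y \<subseteq> carrier M" and y0: "y0 \<in> Y" "l y0 \<noteq> 0"
    and tot: "finsum M (\<lambda>y. ps_const (l y) \<odot>\<^bsub>M\<^esub> y) Y \<in> Z"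
  shows "y0 \<in> sumset M (comb M KK (Y - {y0})) Z"
proof -
  note Zs = ksubD[OF Z]
  let ?S = "finsum M (\<lambda>y. ps_const (l y) \<odot>\<^bsub>M\<^esub> y) (Y - {y0})"
  let ?T = "finsum M (\<lambda>y. ps_const (l y) \<odot>\<^bsub>M\<^esub> y) Y"
  have Yc: "(\<lambda>y. y) \<in> Y - {y0} \<rightarrow> carrier M" using Y(2) by auto
  have Sc: "?S \<in> carrier M" using ksum_closed[OF Yc] by simp
  have y0c: "y0 \<in> carrier M" using Y(2) y0(1) by blast
  have fY: "finite (Y - {y0})" using Y(1) by simp
  have YY: "Y = insert y0 (Y - {y0})" using y0(1) by auto
  have T: "?T = ps_const (l y0) \<odot>\<^bsub>M\<^esub> y0 \<oplus>\<^bsub>M\<^esub> ?S"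
    by (subst YY, rule M.finsum_insert) (use fY Y(2) y0(1) in auto)
  define w where "w = ps_const (- 1 / l y0) \<odot>\<^bsub>M\<^esub> ?S"
  define z where "z = ps_const (1 / l y0) \<odot>\<^bsub>M\<^esub> ?T"
  have Sin: "?S \<in> comb M KK (Y - {y0})"
    using Kcomb_in[OF fY, of "l"] Y(2) by auto
  have w: "w \<in> comb M KK (Y - {y0})"
    unfolding w_def using ksubD(4)[OF ksub_Kcomb[OF fY] Sin] Y(2) by auto
  have z: "z \<in> Z" unfolding z_def using Zs(4)[OF tot] .
  have "z = ps_const (1 / l y0) \<odot>\<^bsub>M\<^esub> (ps_const (l y0) \<odot>\<^bsub>M\<^esub> y0) \<oplus>\<^bsub>M\<^esub> ps_const (1 / l y0) \<odot>\<^bsub>M\<^esub> ?S"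
    unfolding z_def T using y0c Sc by (simp add: smult_r_distr)
  also have "\<dots> = y0 \<oplus>\<^bsub>M\<^esub> ps_const (1 / l y0) \<odot>\<^bsub>M\<^esub> ?S"
    using const_smult_combine(2,4)[OF y0c] y0(2) by simp
  finally have zeq: "z = y0 \<oplus>\<^bsub>M\<^esub> ps_const (1 / l y0) \<odot>\<^bsub>M\<^esub> ?S" .
  have "w \<oplus>\<^bsub>M\<^esub> z = y0 \<oplus>\<^bsub>M\<^esub> (ps_const (- 1 / l y0) \<odot>\<^bsub>M\<^esub> ?S \<oplus>\<^bsub>M\<^esub> ps_const (1 / l y0) \<odot>\<^bsub>M\<^esub> ?S)"
    unfolding zeq w_def using y0c Sc by (simp add: M.a_lcomm)
  also have "\<dots> = y0"
    using const_smult_combine(1,3)[OF Sc] y0c by simp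
  finally show ?thesis using sumsetI[OF w z] by simp
qed

end

primrec Gset :: "nat \<Rightarrow> (((nat \<Rightarrow> nat) \<Rightarrow> 'k::field poly), 'm) module \<Rightarrow> 'm set \<Rightarrow> nat \<Rightarrow> 'm set" where
  "Gset s M A 0 = A"
| "Gset s M A (Suc k) = (\<lambda>(i, g). xv i \<odot>\<^bsub>M\<^esub> g) ` ({..<s} \<times> Gset s M A k)"

context psm
begin

lemma G_fin:
  assumes "finite A" "A \<subseteq> carrier M"
  shows "finite (Gset s M A k) \<and> Gset s M A k \<subseteq> carrier M"
proof (induction k)
  case 0
  then show ?case using assms by simp
next
  case (Suc k)
  have "finite ({..<s} \<times> Gset s M A k)" using Suc by simp
  moreover have "(\<lambda>(i, g). xv i \<odot>\<^bsub>M\<^esub> g) ` ({..<s} \<times> Gset s M A k) \<subseteq> carrier M"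
  proof
    fix y assume "y \<in> (\<lambda>(i, g). xv i \<odot>\<^bsub>M\<^esub> g) ` ({..<s} \<times> Gset s M A k)"
    then obtain i g where ig: "i < s" "g \<in> Gset s M A k" "y = xv i \<odot>\<^bsub>M\<^esub> g" by auto
    have "xv i \<in> carrier RR" using xv_carrier[OF ig(1)] by (simp add: carrP)
    then show "y \<in> carrier M" using ig Suc by auto
  qed
  ultimately show ?case by simp
qed

lemma xv_in: "i < s \<Longrightarrow> xv i \<in> carrier RR"
  using xv_carrier by (simp add: carrP)

lemma GSucI: "i < s \<Longrightarrow> g \<in> Gset s M A k \<Longrightarrow> xv i \<odot>\<^bsub>M\<^esub> g \<in> Gset s M A (Suc k)"
  by force

lemma GSucE:
  assumes "y \<in> Gset s M A (Suc k)"
  obtains i g where "i < s" "g \<in> Gset s M A k" "y = xv i \<odot>\<^bsub>M\<^esub> g"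
  using assms by auto

lemma comb_single_P:
  assumes "finite X" "X \<subseteq> carrier M" "x \<in> X" "a \<in> carrier RR"
  shows "a \<odot>\<^bsub>M\<^esub> x \<in> comb M (carrier RR) X"
  by (rule comb_single[OF assms(1,2) addsub_carrier assms(3,4)])

lemma N_mono:
  assumes "finite A" "A \<subseteq> carrier M"
  shows "comb M (carrier RR) (Gset s M A (Suc k)) \<subseteq> comb M (carrier RR) (Gset s M A k)"
proof -
  note G = G_fin[OF assms, of k] and G' = G_fin[OF assms, of "Suc k"]
  note N = psubD[OF psub_Pspan[OF conjunct1[OF G] conjunct2[OF G]]]
  show ?thesis
  proof (rule comb_least[OF conjunct1[OF G'] N(1) N(2) N(3)])
    fix x a assume x: "x \<in> Gset s M A (Suc k)" and a: "a \<in> carrier RR"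
    obtain i g where ig: "i < s" "g \<in> Gset s M A k" "x = xv i \<odot>\<^bsub>M\<^esub> g" using x by (rule GSucE)
    have "g \<in> comb M (carrier RR) (Gset s M A k)"
      using comb_single_P[OF conjunct1[OF G] conjunct2[OF G] ig(2) R.one_closed] ig(2) G by auto
    then have "xv i \<odot>\<^bsub>M\<^esub> g \<in> comb M (carrier RR) (Gset s M A k)" using N(4) xv_in[OF ig(1)] by blast
    then show "a \<odot>\<^bsub>M\<^esub> x \<in> comb M (carrier RR) (Gset s M A k)" using N(4) a ig(3) by blast
  qed
qed

lemma N_msub:
  assumes "finite A" "A \<subseteq> carrier M"
  shows "comb M (carrier RR) (Gset s M A (Suc k)) \<subseteq> comb M mm (Gset s M A k)"
proof -
  note G = G_fin[OF assms, of k] and G' = G_fin[OF assms, of "Suc k"]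
  note N = psubD[OF psub_mspan[OF conjunct1[OF G] conjunct2[OF G]]]
  show ?thesis
  proof (rule comb_least[OF conjunct1[OF G'] N(1) N(2) N(3)])
    fix x a assume x: "x \<in> Gset s M A (Suc k)" and a: "a \<in> carrier RR"
    obtain i g where ig: "i < s" "g \<in> Gset s M A k" "x = xv i \<odot>\<^bsub>M\<^esub> g" using x by (rule GSucE)
    have gc: "g \<in> carrier M" using ig(2) G by blast
    have "a \<odot>\<^bsub>M\<^esub> x = (a \<otimes>\<^bsub>RR\<^esub> xv i) \<odot>\<^bsub>M\<^esub> g"
      using ig(3) smult_assoc1[OF a xv_in[OF ig(1)] gc] by simp
    moreover have "a \<otimes>\<^bsub>RR\<^esub> xv i \<in> mm" by (rule msub_mult[OF a xv_msub[OF ig(1)]])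
    ultimately show "a \<odot>\<^bsub>M\<^esub> x \<in> comb M mm (Gset s M A k)"
      using comb_single[OF conjunct1[OF G] conjunct2[OF G] addsub_mm ig(2)] by simp
  qed
qed

lemma R_finsum_in:
  assumes "finite I" "\<zero>\<^bsub>RR\<^esub> \<in> S" "\<And>a b. a \<in> S \<Longrightarrow> b \<in> S \<Longrightarrow> a \<oplus>\<^bsub>RR\<^esub> b \<in> S"
    "S \<subseteq> carrier RR" "f \<in> I \<rightarrow> S"
  shows "finsum RR f I \<in> S"
  using assms(1,5)
proof (induction I rule: finite_induct)
  case empty
  then show ?case using assms(2) by simp
next
  case (insert x F)
  have fc: "f \<in> insert x F \<rightarrow> carrier RR" using insert.prems assms(4) by blast
  have "finsum RR f (insert x F) = f x \<oplus>\<^bsub>RR\<^esub> finsum RR f F"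
    using insert fc by (intro R.finsum_insert) auto
  moreover have "finsum RR f F \<in> S" using insert by auto
  moreover have "f x \<in> S" using insert.prems by auto
  ultimately show ?case using assms(3) by simp
qed

lemma ksub_Pcomb:
  assumes "finite X" "X \<subseteq> carrier M"
  shows "ksub (comb M PP X)"
proof (rule ksubI)
  have C: "PP \<subseteq> carrier RR" "\<zero>\<^bsub>RR\<^esub> \<in> PP" using addsub_PP unfolding addsub_def by auto
  show "comb M PP X \<subseteq> carrier M" by (rule comb_carrier[OF assms C(1)])
  show "\<zero>\<^bsub>M\<^esub> \<in> comb M PP X" by (rule comb_zero[OF assms C(2)])
  show "a \<oplus>\<^bsub>M\<^esub> b \<in> comb M PP X" if "a \<in> comb M PP X" "b \<in> comb M PP X" for a b
    using comb_add[OF assms addsub_PP that] .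
  show "ps_const c \<odot>\<^bsub>M\<^esub> a \<in> comb M PP X" if "a \<in> comb M PP X" for a c
    by (rule comb_smult[OF assms C(1) ps_const_in]) (use that in \<open>auto simp: ps_const_poly ps_poly_mult'\<close>)
qed

lemma trunc1:
  assumes "finite A" "A \<subseteq> carrier M"
  shows "comb M (carrier RR) (Gset s M A k) \<subseteq> sumset M (comb M PP (Gset s M A k)) (comb M (carrier RR) (Gset s M A (Suc k)))"
proof -
  note G = G_fin[OF assms, of k] and G' = G_fin[OF assms, of "Suc k"]
  let ?P = "comb M PP (Gset s M A k)"
  let ?N = "comb M (carrier RR) (Gset s M A (Suc k))"
  note P = ksubD[OF ksub_Pcomb[OF conjunct1[OF G] conjunct2[OF G]]]
  note N = psubD[OF psub_Pspan[OF conjunct1[OF G'] conjunct2[OF G']]]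
  note W = ksubD[OF ksub_sumset[OF ksub_Pcomb[OF conjunct1[OF G] conjunct2[OF G]]
        psub_ksub[OF psub_Pspan[OF conjunct1[OF G'] conjunct2[OF G']]]]]
  show ?thesis
  proof (rule comb_least[OF conjunct1[OF G] W(1) W(2) W(3)])
    fix g a assume g: "g \<in> Gset s M A k" and a: "a \<in> carrier RR"
    have gc: "g \<in> carrier M" using g G by blast
    let ?f = "\<lambda>i. xv i \<otimes>\<^bsub>RR\<^esub> dco s a i"
    let ?S = "{r \<in> carrier RR. r \<odot>\<^bsub>M\<^esub> g \<in> ?N}"
    have fS: "?f \<in> {..<s} \<rightarrow> ?S"
    proof (rule Pi_I)
      fix i assume "i \<in> {..<s}"
      then have i: "i < s" by simp
      have d: "dco s a i \<in> carrier RR" using dco_carrier by (simp add: carrP)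
      have "?f i \<odot>\<^bsub>M\<^esub> g = (dco s a i \<otimes>\<^bsub>RR\<^esub> xv i) \<odot>\<^bsub>M\<^esub> g"
        using R.m_comm[OF xv_in[OF i] d] by simp
      also have "\<dots> = dco s a i \<odot>\<^bsub>M\<^esub> (xv i \<odot>\<^bsub>M\<^esub> g)"
        by (rule smult_assoc1[OF d xv_in[OF i] gc])
      finally have "?f i \<odot>\<^bsub>M\<^esub> g = dco s a i \<odot>\<^bsub>M\<^esub> (xv i \<odot>\<^bsub>M\<^esub> g)" .
      moreover have "xv i \<odot>\<^bsub>M\<^esub> g \<in> Gset s M A (Suc k)" by (rule GSucI[OF i g])
      ultimately have "?f i \<odot>\<^bsub>M\<^esub> g \<in> ?N"
        using comb_single_P[OF conjunct1[OF G'] conjunct2[OF G'] _ d] by simp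
      moreover have "?f i \<in> carrier RR" using xv_in[OF i] d by simp
      ultimately show "?f i \<in> ?S" by simp
    qed
    have "finsum RR ?f {..<s} \<in> ?S"
    proof (rule R_finsum_in[OF _ _ _ _ fS])
      show "finite {..<s}" by simp
      show "\<zero>\<^bsub>RR\<^esub> \<in> ?S" using gc N(2) by simp
      show "a' \<oplus>\<^bsub>RR\<^esub> b' \<in> ?S" if "a' \<in> ?S" "b' \<in> ?S" for a' b'
        using that N(3) gc by (simp add: smult_l_distr)
      show "?S \<subseteq> carrier RR" by blast
    qed
    then have q: "finsum RR ?f {..<s} \<odot>\<^bsub>M\<^esub> g \<in> ?N" "finsum RR ?f {..<s} \<in> carrier RR" by auto
    have p: "ps_poly (a z0) \<odot>\<^bsub>M\<^esub> g \<in> ?P"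
      by (rule comb_single[OF conjunct1[OF G] conjunct2[OF G] addsub_PP g]) simp
    have "a \<odot>\<^bsub>M\<^esub> g = (ps_poly (a z0) \<oplus>\<^bsub>RR\<^esub> finsum RR ?f {..<s}) \<odot>\<^bsub>M\<^esub> g"
      using decomp[OF a] by simp
    also have "\<dots> = ps_poly (a z0) \<odot>\<^bsub>M\<^esub> g \<oplus>\<^bsub>M\<^esub> finsum RR ?f {..<s} \<odot>\<^bsub>M\<^esub> g"
      by (rule smult_l_distr[OF ps_poly_in q(2) gc])
    finally show "a \<odot>\<^bsub>M\<^esub> g \<in> sumset M ?P ?N" using sumsetI[OF p q(1)] by simp
  qed
qed

definition Eset :: "nat \<Rightarrow> 'm set \<Rightarrow> nat \<Rightarrow> 'm set" where
  "Eset k0 A k = \<Union> (Gset s M A ` {..k})"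

lemma E_fin:
  assumes "finite A" "A \<subseteq> carrier M"
  shows "finite (Eset k0 A k) \<and> Eset k0 A k \<subseteq> carrier M"
  using G_fin[OF assms] unfolding Eset_def by auto

lemma trunc:
  assumes "finite A" "A \<subseteq> carrier M" "carrier M \<subseteq> comb M (carrier RR) A"
  shows "carrier M \<subseteq> sumset M (comb M PP (Eset 0 A k)) (comb M (carrier RR) (Gset s M A (Suc k)))"
proof (induction k)
  case 0
  have "Eset 0 A 0 = Gset s M A 0" unfolding Eset_def by simp
  then show ?case using trunc1[OF assms(1,2), of 0] assms(3) by simp
next
  case (Suc k)
  note E = E_fin[OF assms(1,2), of 0 "Suc k"] and E0 = E_fin[OF assms(1,2), of 0 k]
  note G = G_fin[OF assms(1,2), of "Suc k"] and G2 = G_fin[OF assms(1,2), of "Suc (Suc k)"]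
  let ?W = "sumset M (comb M PP (Eset 0 A (Suc k))) (comb M (carrier RR) (Gset s M A (Suc (Suc k))))"
  have Wk: "ksub ?W"
    by (rule ksub_sumset[OF ksub_Pcomb[OF conjunct1[OF E] conjunct2[OF E]]
        psub_ksub[OF psub_Pspan[OF conjunct1[OF G2] conjunct2[OF G2]]]])
  have sub1: "Eset 0 A k \<subseteq> Eset 0 A (Suc k)" unfolding Eset_def by (intro Union_mono image_mono) auto
  have sub2: "Gset s M A (Suc k) \<subseteq> Eset 0 A (Suc k)" unfolding Eset_def
    by (rule Union_upper, rule imageI) simp
  have z2: "\<zero>\<^bsub>M\<^esub> \<in> comb M (carrier RR) (Gset s M A (Suc (Suc k)))"
    using psubD(2)[OF psub_Pspan[OF conjunct1[OF G2] conjunct2[OF G2]]] .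
  have a: "comb M PP (Eset 0 A k) \<subseteq> ?W"
  proof -
    have "comb M PP (Eset 0 A k) \<subseteq> comb M PP (Eset 0 A (Suc k))"
      by (rule comb_mono[OF sub1 conjunct1[OF E] conjunct2[OF E] addsub_PP])
    also have "\<dots> \<subseteq> ?W"
      by (rule sumset_left[OF ksubD(1)[OF ksub_Pcomb[OF conjunct1[OF E] conjunct2[OF E]]] z2])
    finally show ?thesis .
  qed
  have b: "comb M (carrier RR) (Gset s M A (Suc k)) \<subseteq> ?W"
  proof -
    have "comb M (carrier RR) (Gset s M A (Suc k)) \<subseteq>
        sumset M (comb M PP (Gset s M A (Suc k))) (comb M (carrier RR) (Gset s M A (Suc (Suc k))))"
      by (rule trunc1[OF assms(1,2)])
    also have "\<dots> \<subseteq> ?W"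
      by (rule sumset_mono[OF comb_mono[OF sub2 conjunct1[OF E] conjunct2[OF E] addsub_PP] order_refl])
    finally show ?thesis .
  qed
  have "sumset M (comb M PP (Eset 0 A k)) (comb M (carrier RR) (Gset s M A (Suc k))) \<subseteq> ?W"
    by (rule sumset_least[OF Wk a b])
  then show ?case using Suc.IH by blast
qed

lemma eval_poly_smult:
  assumes "x \<in> carrier M"
  shows "ps_poly p \<odot>\<^bsub>M\<^esub> x = ps_const (poly p t0) \<odot>\<^bsub>M\<^esub> x \<oplus>\<^bsub>M\<^esub> ps_t_minus t0 \<odot>\<^bsub>M\<^esub> (ps_poly (synthetic_div p t0) \<odot>\<^bsub>M\<^esub> x)"
proof -
  have "ps_poly p = ps_poly ([:poly p t0:] + [:- t0, 1:] * synthetic_div p t0)"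
    using synthetic_div_correct'[of t0 p] by (simp add: add.commute)
  also have "\<dots> = ps_const (poly p t0) \<oplus>\<^bsub>RR\<^esub> ps_t_minus t0 \<otimes>\<^bsub>RR\<^esub> ps_poly (synthetic_div p t0)"
    by (simp only: ps_poly_add' ps_poly_mult' ps_const_poly ps_t_minus_poly)
  finally have e: "ps_poly p = ps_const (poly p t0) \<oplus>\<^bsub>RR\<^esub> ps_t_minus t0 \<otimes>\<^bsub>RR\<^esub> ps_poly (synthetic_div p t0)" .
  show ?thesis unfolding e using assms
    by (simp add: smult_l_distr smult_assoc1)
qed

lemma eval_comb:
  assumes "finite X" "X \<subseteq> carrier M"
  shows "comb M PP X \<subseteq> sumset M (comb M KK X) (tsub M t0)"
proof -
  note W = ksubD[OF ksub_sumset[OF ksub_Kcomb[OF assms] psub_ksub[OF psub_tsub[of t0]]]]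
  show ?thesis
  proof (rule comb_least[OF assms(1) W(1) W(2) W(3)])
    fix x a assume x: "x \<in> X" and a: "a \<in> PP"
    obtain p where p: "a = ps_poly p" using a by blast
    have xc: "x \<in> carrier M" using x assms(2) by blast
    have 1: "ps_const (poly p t0) \<odot>\<^bsub>M\<^esub> x \<in> comb M KK X"
      by (rule comb_single[OF assms addsub_KK x]) simp
    have 2: "ps_t_minus t0 \<odot>\<^bsub>M\<^esub> (ps_poly (synthetic_div p t0) \<odot>\<^bsub>M\<^esub> x) \<in> tsub M t0"
      unfolding tsub_def using xc by auto
    show "a \<odot>\<^bsub>M\<^esub> x \<in> sumset M (comb M KK X) (tsub M t0)"
      using sumsetI[OF 1 2] eval_poly_smult[OF xc, of p t0] p by simp
  qed
qed

lemma comb_insertE: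
  assumes "y \<in> comb M C (insert h H)" "h \<notin> H" "finite H" "insert h H \<subseteq> carrier M" "C \<subseteq> carrier RR"
  obtains a k where "a \<in> C" "k \<in> comb M C H" "y = a \<odot>\<^bsub>M\<^esub> h \<oplus>\<^bsub>M\<^esub> k"
proof -
  obtain c where c: "c \<in> insert h H \<rightarrow> C" "y = finsum M (\<lambda>x. c x \<odot>\<^bsub>M\<^esub> x) (insert h H)"
    using assms(1) unfolding comb_def by blast
  have fc: "(\<lambda>x. c x \<odot>\<^bsub>M\<^esub> x) \<in> insert h H \<rightarrow> carrier M" using c(1) assms(4,5) by blast
  have "y = c h \<odot>\<^bsub>M\<^esub> h \<oplus>\<^bsub>M\<^esub> finsum M (\<lambda>x. c x \<odot>\<^bsub>M\<^esub> x) H"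
    using c(2) M.finsum_insert[OF assms(3,2)] fc by auto
  moreover have "finsum M (\<lambda>x. c x \<odot>\<^bsub>M\<^esub> x) H \<in> comb M C H"
    by (rule comb_memI[of c]) (use c(1) in auto)
  moreover have "c h \<in> C" using c(1) by blast
  ultimately show ?thesis using that by blast
qed

lemma comb_empty: "comb M C {} = {\<zero>\<^bsub>M\<^esub>}"
  unfolding comb_def by auto

lemma nakayama:
  assumes L: "psub L" and H: "finite H" "H \<subseteq> G0" and G0: "G0 \<subseteq> carrier M"
    and gen: "\<And>g. g \<in> G0 \<Longrightarrow> g \<in> sumset M (comb M mm H) L"
  shows "G0 \<subseteq> L"
  using H gen
proof (induction H rule: finite_induct)
  case empty
  show ?case
  proof
    fix g assume g: "g \<in> G0"
    then obtain k l where kl: "k \<in> comb M mm {}" "l \<in> L" "g = k \<oplus>\<^bsub>M\<^esub> l"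
      using empty.prems(2) by (blast elim: sumsetE)
    have "l \<in> carrier M" using kl(2) psubD(1)[OF L] by blast
    then show "g \<in> L" using kl by (simp add: comb_empty)
  qed
next
  case (insert h H)
  have Hc: "insert h H \<subseteq> carrier M" using insert.prems(1) G0 by blast
  have fH: "finite H" by (rule insert.hyps(1))
  let ?W = "sumset M (comb M mm H) L"
  have Wp: "psub ?W" by (rule psub_sumset[OF psub_mspan[OF fH] L]) (use Hc in blast)
  note W = psubD[OF Wp]
  have mH: "comb M mm H \<subseteq> ?W"
    by (rule sumset_left[OF _ psubD(2)[OF L]]) (rule comb_carrier[OF fH _ msub_sub], use Hc in blast)
  have LW: "L \<subseteq> ?W"
    by (rule sumset_right[OF psubD(1)[OF L]]) (rule comb_zero[OF fH _ msub_zero], use Hc in blast)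
  have hG: "h \<in> G0" using insert.prems(1) by blast
  have hc: "h \<in> carrier M" using Hc by blast
  obtain k0 l0 where kl0: "k0 \<in> comb M mm (insert h H)" "l0 \<in> L" "h = k0 \<oplus>\<^bsub>M\<^esub> l0"
    using insert.prems(2)[OF hG] by (blast elim: sumsetE)
  obtain c k where ck: "c \<in> mm" "k \<in> comb M mm H" "k0 = c \<odot>\<^bsub>M\<^esub> h \<oplus>\<^bsub>M\<^esub> k"
    using comb_insertE[OF kl0(1) insert.hyps(2) fH Hc msub_sub] by blast
  have cc: "c \<in> carrier RR" using ck(1) msub_sub by blast
  have kc: "k \<in> carrier M" using ck(2) mH W(1) by blast
  have l0c: "l0 \<in> carrier M" using kl0(2) psubD(1)[OF L] by blast
  let ?r = "k \<oplus>\<^bsub>M\<^esub> l0"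
  have rW: "?r \<in> ?W" using W(3) ck(2) kl0(2) mH LW by blast
  have rc: "?r \<in> carrier M" using kc l0c by simp
  have h1: "h = c \<odot>\<^bsub>M\<^esub> h \<oplus>\<^bsub>M\<^esub> ?r" using kl0(3) ck(3) kc l0c hc cc by (simp add: M.a_assoc)
  have h2: "(\<one>\<^bsub>RR\<^esub> \<ominus>\<^bsub>RR\<^esub> c) \<odot>\<^bsub>M\<^esub> h = ?r"
  proof -
    have "(\<one>\<^bsub>RR\<^esub> \<ominus>\<^bsub>RR\<^esub> c) \<odot>\<^bsub>M\<^esub> h = h \<oplus>\<^bsub>M\<^esub> \<ominus>\<^bsub>M\<^esub> (c \<odot>\<^bsub>M\<^esub> h)"
      unfolding a_minus_def using cc hc by (simp add: smult_l_distr smult_l_minus)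
    also have "\<dots> = ?r"
    proof -
      have "h \<oplus>\<^bsub>M\<^esub> \<ominus>\<^bsub>M\<^esub> (c \<odot>\<^bsub>M\<^esub> h) = (c \<odot>\<^bsub>M\<^esub> h \<oplus>\<^bsub>M\<^esub> ?r) \<oplus>\<^bsub>M\<^esub> \<ominus>\<^bsub>M\<^esub> (c \<odot>\<^bsub>M\<^esub> h)"
        using h1 by simp
      also have "\<dots> = ?r" using rc cc hc
        by (simp add: M.a_comm[of "c \<odot>\<^bsub>M\<^esub> h" ?r] M.a_assoc M.r_neg)
      finally show ?thesis .
    qed
    finally show ?thesis .
  qed
  have cz: "c z0 = 0" using ck(1) by (simp add: msub_def)
  obtain u where u: "u \<in> carrier RR" "u \<otimes>\<^bsub>RR\<^esub> (\<one>\<^bsub>RR\<^esub> \<ominus>\<^bsub>RR\<^esub> c) = \<one>\<^bsub>RR\<^esub>"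
    using one_minus_inv[OF cc cz] by blast
  have "h = (u \<otimes>\<^bsub>RR\<^esub> (\<one>\<^bsub>RR\<^esub> \<ominus>\<^bsub>RR\<^esub> c)) \<odot>\<^bsub>M\<^esub> h" using u(2) hc by simp
  also have "\<dots> = u \<odot>\<^bsub>M\<^esub> ((\<one>\<^bsub>RR\<^esub> \<ominus>\<^bsub>RR\<^esub> c) \<odot>\<^bsub>M\<^esub> h)"
    by (rule smult_assoc1[OF u(1) _ hc]) (use cc in simp)
  also have "\<dots> = u \<odot>\<^bsub>M\<^esub> ?r" using h2 by simp
  finally have hW: "h \<in> ?W" using W(4)[OF u(1) rW] by simp
  have "g \<in> ?W" if g: "g \<in> G0" for g
  proof -
    obtain k1 l1 where kl1: "k1 \<in> comb M mm (insert h H)" "l1 \<in> L" "g = k1 \<oplus>\<^bsub>M\<^esub> l1"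
      using insert.prems(2)[OF g] by (blast elim: sumsetE)
    obtain c1 k2 where ck1: "c1 \<in> mm" "k2 \<in> comb M mm H" "k1 = c1 \<odot>\<^bsub>M\<^esub> h \<oplus>\<^bsub>M\<^esub> k2"
      using comb_insertE[OF kl1(1) insert.hyps(2) fH Hc msub_sub] by blast
    have "c1 \<odot>\<^bsub>M\<^esub> h \<in> ?W" using W(4)[OF _ hW] ck1(1) msub_sub by blast
    moreover have "k2 \<in> ?W" using ck1(2) mH by blast
    moreover have "l1 \<in> ?W" using kl1(2) LW by blast
    ultimately show "g \<in> ?W" using W(3) kl1(3) ck1(3) by simp
  qed
  moreover have "H \<subseteq> G0" using insert.prems(1) by blast
  ultimately show ?case using insert.IH by blast
qed

end

context psm
begin

lemma ksum_single:
  assumes "finite J" "x \<in> J \<rightarrow> carrier M" "i \<in> J"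
  shows "finsum M (\<lambda>j. ps_const (if j = i then d else 0) \<odot>\<^bsub>M\<^esub> x j) J = ps_const d \<odot>\<^bsub>M\<^esub> x i"
proof -
  have JJ: "J = insert i (J - {i})" using assms(3) by auto
  have fc: "(\<lambda>j. ps_const (if j = i then d else 0) \<odot>\<^bsub>M\<^esub> x j) \<in> insert i (J - {i}) \<rightarrow> carrier M"
    using assms(2,3) by auto
  have "finsum M (\<lambda>j. ps_const (if j = i then d else 0) \<odot>\<^bsub>M\<^esub> x j) J
     = ps_const d \<odot>\<^bsub>M\<^esub> x i \<oplus>\<^bsub>M\<^esub> finsum M (\<lambda>j. ps_const (if j = i then d else 0) \<odot>\<^bsub>M\<^esub> x j) (J - {i})"
  proof -
    have xi: "x i \<in> carrier M" using assms(2,3) by blast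
    show ?thesis by (subst JJ, subst M.finsum_insert) (use assms(1) fc xi in auto)
  qed
  also have "finsum M (\<lambda>j. ps_const (if j = i then d else 0) \<odot>\<^bsub>M\<^esub> x j) (J - {i}) = \<zero>\<^bsub>M\<^esub>"
    by (rule ksum_zero) (use assms(1,2) in auto)
  moreover have "x i \<in> carrier M" using assms(2,3) by blast
  ultimately show ?thesis by simp
qed

lemma ksum_reindex:
  assumes "distinct fl" "set fl \<subseteq> carrier M"
  shows "finsum M (\<lambda>e. ps_const (c e) \<odot>\<^bsub>M\<^esub> e) (set fl)
       = finsum M (\<lambda>j. ps_const (c (fl ! j)) \<odot>\<^bsub>M\<^esub> fl ! j) {..<length fl}"
proof -
  have im: "(!) fl ` {..<length fl} = set fl" by (auto simp: set_conv_nth)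
  have inj: "inj_on ((!) fl) {..<length fl}" using assms(1) by (simp add: inj_on_nth)
  have "finsum M (\<lambda>e. ps_const (c e) \<odot>\<^bsub>M\<^esub> e) ((!) fl ` {..<length fl})
      = finsum M (\<lambda>j. ps_const (c (fl ! j)) \<odot>\<^bsub>M\<^esub> fl ! j) {..<length fl}"
    by (rule M.finsum_reindex[OF _ inj]) (use assms(2) im in auto)
  then show ?thesis using im by simp
qed

lemma LA:
  assumes W: "ksub W" and fl: "set fl \<subseteq> carrier M"
    and A: "Am \<in> carrier_mat (length fl) (length fl)" "det Am \<noteq> 0"
    and rel: "\<And>i. i < length fl \<Longrightarrow>
       finsum M (\<lambda>j. ps_const (Am $$ (i, j)) \<odot>\<^bsub>M\<^esub> fl ! j) {..<length fl} \<in> W"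
  shows "set fl \<subseteq> W"
proof
  note Ws = ksubD[OF W]
  let ?m = "length fl"
  let ?x = "\<lambda>j. fl ! j"
  let ?adj = "adj_mat Am"
  have xc: "?x \<in> {..<?m} \<rightarrow> carrier M" using fl by auto
  have adjc: "?adj \<in> carrier_mat ?m ?m" using adj_mat(1)[OF A(1)] .
  have prod: "?adj * Am = det Am \<cdot>\<^sub>m 1\<^sub>m ?m" using adj_mat(3)[OF A(1)] .
  fix e assume "e \<in> set fl"
  then obtain i where i: "i < ?m" "e = fl ! i" by (auto simp: set_conv_nth)
  have pi: "(\<lambda>k. ps_const (?adj $$ (i, k)) \<odot>\<^bsub>M\<^esub>
      finsum M (\<lambda>j. ps_const (Am $$ (k, j)) \<odot>\<^bsub>M\<^esub> ?x j) {..<?m}) \<in> {..<?m} \<rightarrow> W"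
    using rel Ws(4) by auto
  have "finsum M (\<lambda>k. ps_const (?adj $$ (i, k)) \<odot>\<^bsub>M\<^esub>
      finsum M (\<lambda>j. ps_const (Am $$ (k, j)) \<odot>\<^bsub>M\<^esub> ?x j) {..<?m}) {..<?m} \<in> W"
    using finsum_in[of "{..<?m}" W, OF _ Ws(2) _ Ws(1) pi] Ws(3) by blast
  also have "finsum M (\<lambda>k. ps_const (?adj $$ (i, k)) \<odot>\<^bsub>M\<^esub>
      finsum M (\<lambda>j. ps_const (Am $$ (k, j)) \<odot>\<^bsub>M\<^esub> ?x j) {..<?m}) {..<?m}
    = finsum M (\<lambda>j. ps_const (\<Sum>k\<in>{..<?m}. ?adj $$ (i, k) * Am $$ (k, j)) \<odot>\<^bsub>M\<^esub> ?x j) {..<?m}"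
    by (rule LIN[OF _ _ xc]) simp_all
  also have "\<dots> = finsum M (\<lambda>j. ps_const (if j = i then det Am else 0) \<odot>\<^bsub>M\<^esub> ?x j) {..<?m}"
  proof (rule M.finsum_cong')
    show "(\<lambda>j. ps_const (if j = i then det Am else 0) \<odot>\<^bsub>M\<^esub> ?x j) \<in> {..<?m} \<rightarrow> carrier M"
      using xc by auto
    fix j assume "j \<in> {..<?m}"
    then have j: "j < ?m" by simp
    have "(\<Sum>k\<in>{..<?m}. ?adj $$ (i, k) * Am $$ (k, j)) = (?adj * Am) $$ (i, j)"
      using adjc A(1) i(1) j
      by (simp add: index_mult_mat scalar_prod_def atLeast0LessThan)
    also have "\<dots> = (if j = i then det Am else 0)" using prod i(1) j by auto
    finally show "ps_const (\<Sum>k\<in>{..<?m}. ?adj $$ (i, k) * Am $$ (k, j)) \<odot>\<^bsub>M\<^esub> ?x j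
        = ps_const (if j = i then det Am else 0) \<odot>\<^bsub>M\<^esub> ?x j" by simp
  qed simp
  also have "\<dots> = ps_const (det Am) \<odot>\<^bsub>M\<^esub> ?x i"
    by (rule ksum_single[OF _ xc]) (use i in auto)
  finally have "ps_const (det Am) \<odot>\<^bsub>M\<^esub> e \<in> W" using i by simp
  then have "ps_const (1 / det Am) \<odot>\<^bsub>M\<^esub> (ps_const (det Am) \<odot>\<^bsub>M\<^esub> e) \<in> W" by (rule Ws(4))
  moreover have "e \<in> carrier M" using i fl by auto
  ultimately show "e \<in> W" using const_smult_combine(2,4) A(2) by simp
qed

lemma self_in_KS:
  assumes "finite X" "X \<subseteq> carrier M" "x \<in> X" "\<zero>\<^bsub>M\<^esub> \<in> Z"
  shows "x \<in> sumset M (comb M KK X) Z"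
proof -
  have "ps_const 1 \<odot>\<^bsub>M\<^esub> x \<in> comb M KK X" by (rule comb_single[OF assms(1,2) addsub_KK assms(3)]) simp
  then have "x \<in> comb M KK X" using const_smult_combine(4) assms(2,3) by auto
  then show ?thesis using sumset_left[OF comb_carrier[OF assms(1,2)] assms(4)] addsub_KK
    unfolding addsub_def by blast
qed

lemma KS_ksub:
  assumes "ksub Z" "finite X" "X \<subseteq> carrier M"
  shows "ksub (sumset M (comb M KK X) Z)"
  by (rule ksub_sumset[OF ksub_Kcomb[OF assms(2,3)] assms(1)])

lemma KS_least:
  assumes "ksub W" "finite X" "X \<subseteq> W" "Z \<subseteq> W"
  shows "sumset M (comb M KK X) Z \<subseteq> W"
  by (rule sumset_least[OF assms(1) Kcomb_least[OF assms(2,1,3)] assms(4)])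

lemma KS_absorb:
  assumes Z: "ksub Z" and S: "finite S" "S \<subseteq> carrier M" and y0: "y0 \<in> sumset M (comb M KK (S - {y0})) Z"
  shows "sumset M (comb M KK S) Z \<subseteq> sumset M (comb M KK (S - {y0})) Z"
proof -
  have fS: "finite (S - {y0})" using S(1) by simp
  have Sc: "S - {y0} \<subseteq> carrier M" using S(2) by blast
  note Wk = KS_ksub[OF Z fS Sc]
  have "S \<subseteq> sumset M (comb M KK (S - {y0})) Z"
  proof
    fix x assume "x \<in> S"
    show "x \<in> sumset M (comb M KK (S - {y0})) Z"
    proof (cases "x = y0")
      case True then show ?thesis using y0 by simp
    next
      case False
      then show ?thesis using self_in_KS[OF fS Sc _ ksubD(2)[OF Z]] \<open>x \<in> S\<close> by blast
    qed
  qed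
  moreover have "Z \<subseteq> sumset M (comb M KK (S - {y0})) Z"
    by (rule sumset_right[OF ksubD(1)[OF Z] comb_zero[OF fS Sc]]) (simp add: ps_const_zero[symmetric])
  ultimately show ?thesis by (rule KS_least[OF Wk S(1)])
qed

lemma chain:
  assumes Zk: "\<And>j. ksub (Z j)" and dec: "\<And>j. Z (Suc j) \<subseteq> Z j"
    and S: "finite S" "S \<subseteq> carrier M" "card S \<le> n"
    and cov: "Z 0 \<subseteq> sumset M (comb M KK S) (Z (Suc n))"
  shows "\<exists>k\<le>n. Z k \<subseteq> Z (Suc k)"
proof (rule ccontr)
  assume "\<not> (\<exists>k\<le>n. Z k \<subseteq> Z (Suc k))"
  then have "\<forall>k. \<exists>y. k \<le> n \<longrightarrow> y \<in> Z k \<and> y \<notin> Z (Suc k)" by blast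
  then obtain y where y: "\<And>k. k \<le> n \<Longrightarrow> y k \<in> Z k \<and> y k \<notin> Z (Suc k)" by metis
  have anti: "Z j' \<subseteq> Z j" if "j \<le> j'" for j j'
    using that
  proof (induction j' rule: dec_induct)
    case base then show ?case by simp
  next
    case (step m) then show ?case using dec[of m] by blast
  qed
  have inj: "inj_on y {..n}"
  proof (rule inj_onI)
    fix a b assume a: "a \<in> {..n}" and b: "b \<in> {..n}" and e: "y a = y b"
    show "a = b"
    proof (rule ccontr)
      assume "a \<noteq> b"
      then consider "a < b" | "b < a" by linarith
      then show False
      proof cases
        case 1
        have "y b \<in> Z (Suc a)" using y[of b] b anti[of "Suc a" b] 1 by auto
        then show False using y[of a] a e by auto
      next
        case 2
        have "y a \<in> Z (Suc b)" using y[of a] a anti[of "Suc b" a] 2 by auto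
        then show False using y[of b] b e by auto
      qed
    qed
  qed
  define Y where "Y = y ` {..n}"
  have fY: "finite Y" unfolding Y_def by simp
  have cY: "card Y = Suc n" unfolding Y_def using card_image[OF inj] by simp
  have YZ0: "Y \<subseteq> Z 0" unfolding Y_def using y anti[of 0] by blast
  have Yc: "Y \<subseteq> carrier M" using YZ0 ksubD(1)[OF Zk[of 0]] by blast
  obtain l where l: "\<exists>v\<in>Y. l v \<noteq> 0" "finsum M (\<lambda>v. ps_const (l v) \<odot>\<^bsub>M\<^esub> v) Y \<in> Z (Suc n)"
    using DEP[OF Zk[of "Suc n"] S(1,2) fY] YZ0 cov cY S(3) by force
  define J where "J = {j. j \<le> n \<and> l (y j) \<noteq> 0}"
  have Jne: "J \<noteq> {}" using l(1) unfolding J_def Y_def by auto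
  define j0 where "j0 = Min J"
  have fJ: "finite J" unfolding J_def by simp
  have j0J: "j0 \<in> J" unfolding j0_def using Min_in[OF fJ Jne] .
  have j0min: "j0 \<le> j" if "j \<in> J" for j unfolding j0_def using Min_le[OF fJ that] .
  have j0n: "j0 \<le> n" and lj0: "l (y j0) \<noteq> 0" using j0J unfolding J_def by auto
  define Y' where "Y' = y ` {j0..n}"
  have Y'Y: "Y' \<subseteq> Y" unfolding Y'_def Y_def by auto
  have fY': "finite Y'" unfolding Y'_def by simp
  have Y'c: "Y' \<subseteq> carrier M" using Y'Y Yc by blast
  have idc: "(\<lambda>v. v) \<in> Y \<rightarrow> carrier M" using Yc by auto
  have split: "Y = Y' \<union> (Y - Y')" using Y'Y by auto
  have "finsum M (\<lambda>v. ps_const (l v) \<odot>\<^bsub>M\<^esub> v) Y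
      = finsum M (\<lambda>v. ps_const (l v) \<odot>\<^bsub>M\<^esub> v) Y' \<oplus>\<^bsub>M\<^esub> finsum M (\<lambda>v. ps_const (l v) \<odot>\<^bsub>M\<^esub> v) (Y - Y')"
    by (subst split, rule M.finsum_Un_disjoint) (use fY fY' Yc Y'c in auto)
  also have "finsum M (\<lambda>v. ps_const (l v) \<odot>\<^bsub>M\<^esub> v) (Y - Y') = \<zero>\<^bsub>M\<^esub>"
  proof (rule ksum_zero)
    show "finite (Y - Y')" using fY by simp
    show "(\<lambda>v. v) \<in> Y - Y' \<rightarrow> carrier M" using Yc by auto
    fix v assume v: "v \<in> Y - Y'"
    then obtain j where j: "j \<le> n" "v = y j" unfolding Y_def by auto
    have "j \<notin> {j0..n}" using v j unfolding Y'_def by auto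
    then have "j < j0" using j by auto
    then have "j \<notin> J" using j0min by fastforce
    then show "l v = 0" using j unfolding J_def by auto
  qed
  moreover have "finsum M (\<lambda>v. ps_const (l v) \<odot>\<^bsub>M\<^esub> v) Y' \<in> carrier M"
    by (rule ksum_closed[of "\<lambda>v. v"]) (use Y'c in auto)
  ultimately have "finsum M (\<lambda>v. ps_const (l v) \<odot>\<^bsub>M\<^esub> v) Y' \<in> Z (Suc n)"
    using l(2) by simp
  moreover have "Z (Suc n) \<subseteq> Z (Suc j0)" using anti j0n by simp
  ultimately have tot: "finsum M (\<lambda>v. ps_const (l v) \<odot>\<^bsub>M\<^esub> v) Y' \<in> Z (Suc j0)" by blast
  have yj0: "y j0 \<in> Y'" unfolding Y'_def using j0n by auto
  have drop: "y j0 \<in> sumset M (comb M KK (Y' - {y j0})) (Z (Suc j0))"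
    by (rule DROP[OF Zk fY' Y'c yj0 lj0 tot])
  have "Y' - {y j0} \<subseteq> Z (Suc j0)"
  proof
    fix v assume v: "v \<in> Y' - {y j0}"
    then obtain j where j: "j0 \<le> j" "j \<le> n" "v = y j" unfolding Y'_def by auto
    have "j \<noteq> j0" using v j by auto
    then have "Suc j0 \<le> j" using j by simp
    then show "v \<in> Z (Suc j0)" using y[of j] j anti by blast
  qed
  then have "sumset M (comb M KK (Y' - {y j0})) (Z (Suc j0)) \<subseteq> Z (Suc j0)"
    by (intro KS_least[OF Zk]) (use fY' in auto)
  then show False using drop y[of j0] j0n by blast
qed

end

context psm
begin

lemma Pcomb_coord:
  assumes "y \<in> comb M PP X" "X \<subseteq> carrier M"
  shows "\<exists>q. y = finsum M (\<lambda>x. ps_poly (q x) \<odot>\<^bsub>M\<^esub> x) X"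
proof -
  obtain c' where c': "c' \<in> X \<rightarrow> PP" "y = finsum M (\<lambda>x. c' x \<odot>\<^bsub>M\<^esub> x) X"
    using assms(1) unfolding comb_def by blast
  define c where "c = (\<lambda>x. SOME a. c' x = ps_poly a)"
  have cc: "c' x = ps_poly (c x)" if "x \<in> X" for x
  proof -
    have "\<exists>a. c' x = ps_poly a" using c'(1) that by blast
    then show ?thesis unfolding c_def by (rule someI_ex)
  qed
  have "finsum M (\<lambda>x. c' x \<odot>\<^bsub>M\<^esub> x) X = finsum M (\<lambda>x. ps_poly (c x) \<odot>\<^bsub>M\<^esub> x) X"
  proof (rule M.finsum_cong')
    show "(\<lambda>x. ps_poly (c x) \<odot>\<^bsub>M\<^esub> x) \<in> X \<rightarrow> carrier M" using assms(2) by auto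
    show "c' x \<odot>\<^bsub>M\<^esub> x = ps_poly (c x) \<odot>\<^bsub>M\<^esub> x" if "x \<in> X" for x using cc[OF that] by simp
  qed simp
  then show ?thesis using c'(2) by blast
qed

lemma psum_closed:
  assumes "X \<subseteq> carrier M"
  shows "finsum M (\<lambda>x. ps_poly (q x) \<odot>\<^bsub>M\<^esub> x) X \<in> carrier M"
  using assms by (intro M.finsum_closed) auto

lemma psum_scale:
  assumes "finite X" "X \<subseteq> carrier M"
  shows "ps_poly r \<odot>\<^bsub>M\<^esub> finsum M (\<lambda>x. ps_poly (q x) \<odot>\<^bsub>M\<^esub> x) X
       = finsum M (\<lambda>x. ps_poly (r * q x) \<odot>\<^bsub>M\<^esub> x) X"
proof -
  have f1: "(\<lambda>x. ps_poly (q x) \<odot>\<^bsub>M\<^esub> x) \<in> X \<rightarrow> carrier M" using assms(2) by auto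
  have "ps_poly r \<odot>\<^bsub>M\<^esub> finsum M (\<lambda>x. ps_poly (q x) \<odot>\<^bsub>M\<^esub> x) X
     = finsum M (\<lambda>x. ps_poly r \<odot>\<^bsub>M\<^esub> (ps_poly (q x) \<odot>\<^bsub>M\<^esub> x)) X"
    by (rule finsum_smult_ldistr[OF assms(1) ps_poly_in f1])
  also have "\<dots> = finsum M (\<lambda>x. ps_poly (r * q x) \<odot>\<^bsub>M\<^esub> x) X"
  proof (rule M.finsum_cong')
    show "(\<lambda>x. ps_poly (r * q x) \<odot>\<^bsub>M\<^esub> x) \<in> X \<rightarrow> carrier M" using assms(2) by auto
    show "ps_poly r \<odot>\<^bsub>M\<^esub> (ps_poly (q x) \<odot>\<^bsub>M\<^esub> x) = ps_poly (r * q x) \<odot>\<^bsub>M\<^esub> x" if "x \<in> X" for x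
    proof -
      have "x \<in> carrier M" using that assms(2) by blast
      then show ?thesis using smult_assoc1[OF ps_poly_in ps_poly_in] by (simp add: ps_poly_mult')
    qed
  qed simp
  finally show ?thesis .
qed

lemma psum_eval:
  assumes "finite X" "X \<subseteq> carrier M"
  shows "\<exists>tp\<in>tsub M t0. finsum M (\<lambda>x. ps_poly (Q x) \<odot>\<^bsub>M\<^esub> x) X
       = finsum M (\<lambda>x. ps_const (poly (Q x) t0) \<odot>\<^bsub>M\<^esub> x) X \<oplus>\<^bsub>M\<^esub> tp"
proof -
  let ?b = "\<lambda>x. ps_t_minus t0 \<odot>\<^bsub>M\<^esub> (ps_poly (synthetic_div (Q x) t0) \<odot>\<^bsub>M\<^esub> x)"
  have f1: "(\<lambda>x. ps_const (poly (Q x) t0) \<odot>\<^bsub>M\<^esub> x) \<in> X \<rightarrow> carrier M" using assms(2) by auto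
  have f2: "?b \<in> X \<rightarrow> carrier M" using assms(2) by auto
  have "finsum M (\<lambda>x. ps_poly (Q x) \<odot>\<^bsub>M\<^esub> x) X
      = finsum M (\<lambda>x. ps_const (poly (Q x) t0) \<odot>\<^bsub>M\<^esub> x \<oplus>\<^bsub>M\<^esub> ?b x) X"
  proof (rule M.finsum_cong')
    show "(\<lambda>x. ps_const (poly (Q x) t0) \<odot>\<^bsub>M\<^esub> x \<oplus>\<^bsub>M\<^esub> ?b x) \<in> X \<rightarrow> carrier M" using assms(2) by auto
    show "ps_poly (Q x) \<odot>\<^bsub>M\<^esub> x = ps_const (poly (Q x) t0) \<odot>\<^bsub>M\<^esub> x \<oplus>\<^bsub>M\<^esub> ?b x" if "x \<in> X" for x
      using eval_poly_smult[of x "Q x" t0] that assms(2) by blast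
  qed simp
  also have "\<dots> = finsum M (\<lambda>x. ps_const (poly (Q x) t0) \<odot>\<^bsub>M\<^esub> x) X \<oplus>\<^bsub>M\<^esub> finsum M ?b X"
    by (rule M.finsum_addf[OF f1 f2])
  finally have eq: "finsum M (\<lambda>x. ps_poly (Q x) \<odot>\<^bsub>M\<^esub> x) X
      = finsum M (\<lambda>x. ps_const (poly (Q x) t0) \<odot>\<^bsub>M\<^esub> x) X \<oplus>\<^bsub>M\<^esub> finsum M ?b X" .
  note T = psubD[OF psub_tsub[of t0]]
  have pi: "?b \<in> X \<rightarrow> tsub M t0"
  proof (rule Pi_I)
    fix x assume "x \<in> X"
    then have "ps_poly (synthetic_div (Q x) t0) \<odot>\<^bsub>M\<^esub> x \<in> carrier M" using assms(2) by auto
    then show "?b x \<in> tsub M t0" unfolding tsub_def by blast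
  qed
  have "finsum M ?b X \<in> tsub M t0"
    using finsum_in[of X "tsub M t0" ?b, OF assms(1) T(2) _ T(1) pi] T(3) by blast
  then show ?thesis using eq by blast
qed

lemma rel_at:
  assumes E: "finite E" "E \<subseteq> carrier M" and SE: "S \<subseteq> E"
    and N: "psub N" and e: "e \<in> E - S"
    and k: "k \<in> comb M KK S" and w: "w \<in> N" and w': "w' \<in> N"
    and erep: "e = k \<oplus>\<^bsub>M\<^esub> (w \<oplus>\<^bsub>M\<^esub> ps_t_minus to \<odot>\<^bsub>M\<^esub>
                 (finsum M (\<lambda>x. ps_poly (q x) \<odot>\<^bsub>M\<^esub> x) E \<oplus>\<^bsub>M\<^esub> w'))"
  shows "finsum M (\<lambda>x. ps_const ((if x = e then 1 else 0) - poly ([:-to, 1:] * q x) t0) \<odot>\<^bsub>M\<^esub> x) (E - S)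
      \<in> sumset M (comb M KK S) (sumset M N (tsub M t0))"
proof -
  let ?T = "tsub M t0"
  let ?F = "E - S"
  let ?W = "sumset M (comb M KK S) (sumset M N ?T)"
  have fS: "finite S" using E(1) SE finite_subset by blast
  have Sc: "S \<subseteq> carrier M" using E(2) SE by blast
  have fF: "finite ?F" using E(1) by simp
  have Fc: "?F \<subseteq> carrier M" using E(2) by blast
  note Ns = psubD[OF N] and Ts = psubD[OF psub_tsub[of t0]]
  have Zk: "ksub (sumset M N ?T)" by (rule psub_ksub[OF psub_sumset[OF N psub_tsub]])
  note Ws = ksubD[OF KS_ksub[OF Zk fS Sc]]
  have z0K: "\<zero>\<^bsub>RR\<^esub> \<in> KK" by (simp add: ps_const_zero[symmetric])
  have ZW: "sumset M N ?T \<subseteq> ?W"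
    by (rule sumset_right[OF ksubD(1)[OF Zk] comb_zero[OF fS Sc z0K]])
  have NW: "N \<subseteq> ?W"
    using sumset_left[OF Ns(1) Ts(2)] ZW by (rule subset_trans)
  have TW: "?T \<subseteq> ?W"
    using sumset_right[OF Ts(1) Ns(2)] ZW by (rule subset_trans)
  have KKc: "KK \<subseteq> carrier RR" by auto
  have KW: "comb M KK S \<subseteq> ?W"
    by (rule sumset_left[OF comb_carrier[OF fS Sc KKc] ksubD(2)[OF Zk]])
  let ?a = "\<lambda>x. poly ([:-to, 1:] * q x) t0"
  obtain tp where tp: "tp \<in> ?T" "finsum M (\<lambda>x. ps_poly ([:-to, 1:] * q x) \<odot>\<^bsub>M\<^esub> x) E
       = finsum M (\<lambda>x. ps_const (?a x) \<odot>\<^bsub>M\<^esub> x) E \<oplus>\<^bsub>M\<^esub> tp"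
    using psum_eval[OF E, of t0 "\<lambda>x. [:-to, 1:] * q x"] by blast
  have EE: "E = S \<union> ?F" using SE by auto
  have sumE: "finsum M (\<lambda>x. ps_const (?a x) \<odot>\<^bsub>M\<^esub> x) E
      = finsum M (\<lambda>x. ps_const (?a x) \<odot>\<^bsub>M\<^esub> x) S \<oplus>\<^bsub>M\<^esub> finsum M (\<lambda>x. ps_const (?a x) \<odot>\<^bsub>M\<^esub> x) ?F"
  proof -
    have "finsum M (\<lambda>x. ps_const (?a x) \<odot>\<^bsub>M\<^esub> x) (S \<union> ?F)
      = finsum M (\<lambda>x. ps_const (?a x) \<odot>\<^bsub>M\<^esub> x) S \<oplus>\<^bsub>M\<^esub> finsum M (\<lambda>x. ps_const (?a x) \<odot>\<^bsub>M\<^esub> x) ?F"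
      by (rule M.finsum_Un_disjoint) (use fS fF Sc Fc in auto)
    then show ?thesis by (simp only: EE[symmetric])
  qed
  let ?sS = "finsum M (\<lambda>x. ps_const (?a x) \<odot>\<^bsub>M\<^esub> x) S"
  let ?sF = "finsum M (\<lambda>x. ps_const (?a x) \<odot>\<^bsub>M\<^esub> x) ?F"
  have sSc: "?sS \<in> carrier M" using Sc by (intro M.finsum_closed) auto
  have sFc: "?sF \<in> carrier M" using Fc by (intro M.finsum_closed) auto
  have sSW: "?sS \<in> ?W" by (rule subsetD[OF KW Kcomb_in[OF fS Sc, of ?a]])
  have tpc: "tp \<in> carrier M" using tp(1) Ts(1) by blast
  have wc: "w \<in> carrier M" "w' \<in> carrier M" using w w' Ns(1) by auto
  have kc: "k \<in> carrier M" using k KW Ws(1) by blast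
  have tw'N: "ps_t_minus to \<odot>\<^bsub>M\<^esub> w' \<in> N" using Ns(4)[OF ps_t_minus_in w'] .
  have tw'c: "ps_t_minus to \<odot>\<^bsub>M\<^esub> w' \<in> carrier M" using wc by simp
  have "ps_t_minus to \<odot>\<^bsub>M\<^esub> finsum M (\<lambda>x. ps_poly (q x) \<odot>\<^bsub>M\<^esub> x) E
       = finsum M (\<lambda>x. ps_poly ([:-to, 1:] * q x) \<odot>\<^bsub>M\<^esub> x) E"
    unfolding ps_t_minus_poly by (rule psum_scale[OF E])
  then have tE: "ps_t_minus to \<odot>\<^bsub>M\<^esub> finsum M (\<lambda>x. ps_poly (q x) \<odot>\<^bsub>M\<^esub> x) E = ?sS \<oplus>\<^bsub>M\<^esub> ?sF \<oplus>\<^bsub>M\<^esub> tp"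
    using tp(2) sumE by simp
  define w0 where "w0 = k \<oplus>\<^bsub>M\<^esub> (w \<oplus>\<^bsub>M\<^esub> (?sS \<oplus>\<^bsub>M\<^esub> (tp \<oplus>\<^bsub>M\<^esub> ps_t_minus to \<odot>\<^bsub>M\<^esub> w')))"
  have w0W: "w0 \<in> ?W"
  proof -
    have 1: "tp \<oplus>\<^bsub>M\<^esub> ps_t_minus to \<odot>\<^bsub>M\<^esub> w' \<in> ?W"
      by (rule Ws(3)) (use TW tp(1) NW tw'N in blast)+
    have 2: "?sS \<oplus>\<^bsub>M\<^esub> (tp \<oplus>\<^bsub>M\<^esub> ps_t_minus to \<odot>\<^bsub>M\<^esub> w') \<in> ?W"
      by (rule Ws(3)[OF sSW 1])
    have 3: "w \<oplus>\<^bsub>M\<^esub> (?sS \<oplus>\<^bsub>M\<^esub> (tp \<oplus>\<^bsub>M\<^esub> ps_t_minus to \<odot>\<^bsub>M\<^esub> w')) \<in> ?W"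
      by (rule Ws(3)[OF _ 2]) (use NW w in blast)
    show ?thesis unfolding w0_def by (rule Ws(3)[OF _ 3]) (use KW k in blast)
  qed
  have w0c: "w0 \<in> carrier M" using w0W Ws(1) by blast
  have eq: "e = w0 \<oplus>\<^bsub>M\<^esub> ?sF"
  proof -
    have "e = k \<oplus>\<^bsub>M\<^esub> (w \<oplus>\<^bsub>M\<^esub> ((?sS \<oplus>\<^bsub>M\<^esub> ?sF \<oplus>\<^bsub>M\<^esub> tp) \<oplus>\<^bsub>M\<^esub> ps_t_minus to \<odot>\<^bsub>M\<^esub> w'))"
      using erep tE psum_closed[OF E(2), of q] wc by (simp add: smult_r_distr)
    then show ?thesis unfolding w0_def using kc wc sSc sFc tpc tw'c by (simp add: M.a_ac)
  qed
  have ec: "e \<in> carrier M" using e E(2) by blast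
  have idc: "(\<lambda>x. x) \<in> ?F \<rightarrow> carrier M" using Fc by auto
  have "finsum M (\<lambda>x. ps_const ((if x = e then 1 else 0) - ?a x) \<odot>\<^bsub>M\<^esub> x) ?F
      = finsum M (\<lambda>x. ps_const (if x = e then 1 else 0) \<odot>\<^bsub>M\<^esub> x) ?F
        \<oplus>\<^bsub>M\<^esub> finsum M (\<lambda>x. ps_const (- ?a x) \<odot>\<^bsub>M\<^esub> x) ?F"
    using ksum_add[OF fF idc, of "\<lambda>x. if x = e then 1 else 0" "\<lambda>x. - ?a x"] by (simp only: diff_conv_add_uminus)
  also have "finsum M (\<lambda>x. ps_const (if x = e then 1 else 0) \<odot>\<^bsub>M\<^esub> x) ?F = ps_const 1 \<odot>\<^bsub>M\<^esub> e"
    by (rule ksum_single[OF fF idc e])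
  also have "finsum M (\<lambda>x. ps_const (- ?a x) \<odot>\<^bsub>M\<^esub> x) ?F = ps_const (-1) \<odot>\<^bsub>M\<^esub> ?sF"
    using ksum_scale[OF fF idc, of "-1" ?a] by simp
  also have "ps_const 1 \<odot>\<^bsub>M\<^esub> e \<oplus>\<^bsub>M\<^esub> ps_const (-1) \<odot>\<^bsub>M\<^esub> ?sF = w0"
    using const_smult_combine(4)[OF ec] const_smult_combine(5)[OF sFc] eq w0c sFc
    by (simp add: M.a_assoc M.r_neg)
  finally show ?thesis using w0W by simp
qed

end

context psm
begin

lemma choose_S:
  assumes E: "finite E" "E \<subseteq> carrier M" and Zo: "ksub Zo" and TZ: "tsub M to \<subseteq> Zo"
    and B: "spans_fiber M to B"
  shows "\<exists>S. S \<subseteq> E \<and> E \<subseteq> sumset M (comb M KK S) Zo \<and> card S \<le> card B"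
proof -
  define P where "P = (\<lambda>S. S \<subseteq> E \<and> E \<subseteq> sumset M (comb M KK S) Zo)"
  have PE: "P E" unfolding P_def using self_in_KS[OF E _ ksubD(2)[OF Zo]] by blast
  obtain S where PS: "P S" and min: "\<And>S'. P S' \<Longrightarrow> card S \<le> card S'"
    using ex_has_least_nat[of P E card] PE by blast
  have SE: "S \<subseteq> E" and ES: "E \<subseteq> sumset M (comb M KK S) Zo" using PS unfolding P_def by auto
  have fS: "finite S" using SE E(1) finite_subset by blast
  have Sc: "S \<subseteq> carrier M" using SE E(2) by blast
  have Bs: "finite B" "B \<subseteq> carrier M" "carrier M \<subseteq> sumset M (comb M KK B) (tsub M to)"
    using B unfolding spans_fiber_iff by auto
  have "card S \<le> card B"
  proof (rule ccontr)
    assume "\<not> card S \<le> card B"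
    then have lt: "card B < card S" by simp
    have SB: "S \<subseteq> sumset M (comb M KK B) (tsub M to)" using Sc Bs(3) by blast
    obtain l where l: "\<exists>y\<in>S. l y \<noteq> 0" "finsum M (\<lambda>y. ps_const (l y) \<odot>\<^bsub>M\<^esub> y) S \<in> tsub M to"
      using DEP[OF psub_ksub[OF psub_tsub] Bs(1,2) fS SB lt] by blast
    obtain y0 where y0: "y0 \<in> S" "l y0 \<noteq> 0" using l(1) by blast
    have "y0 \<in> sumset M (comb M KK (S - {y0})) Zo"
      by (rule DROP[of Zo S y0 l, OF Zo fS Sc y0]) (use l(2) TZ in blast)
    then have "sumset M (comb M KK S) Zo \<subseteq> sumset M (comb M KK (S - {y0})) Zo"
      by (rule KS_absorb[OF Zo fS Sc])
    then have "P (S - {y0})" unfolding P_def using SE ES by blast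
    then have "card S \<le> card (S - {y0})" by (rule min)
    moreover have "card (S - {y0}) < card S" using fS y0(1) by (rule card_Diff1_less)
    ultimately show False by simp
  qed
  then show ?thesis using SE ES by blast
qed

lemma rep_exists:
  assumes E: "finite E" "E \<subseteq> carrier M" and SE: "S \<subseteq> E"
    and ES: "E \<subseteq> sumset M (comb M KK S) (sumset M N (tsub M to))"
    and cov: "carrier M \<subseteq> sumset M (comb M PP E) N"
  shows "\<exists>qf. \<forall>e\<in>E - S. \<exists>k w w'. k \<in> comb M KK S \<and> w \<in> N \<and> w' \<in> N \<and>
           e = k \<oplus>\<^bsub>M\<^esub> (w \<oplus>\<^bsub>M\<^esub> ps_t_minus to \<odot>\<^bsub>M\<^esub>
                 (finsum M (\<lambda>x. ps_poly (qf e x) \<odot>\<^bsub>M\<^esub> x) E \<oplus>\<^bsub>M\<^esub> w'))"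
proof -
  have "\<exists>q. \<exists>k w w'. k \<in> comb M KK S \<and> w \<in> N \<and> w' \<in> N \<and>
           e = k \<oplus>\<^bsub>M\<^esub> (w \<oplus>\<^bsub>M\<^esub> ps_t_minus to \<odot>\<^bsub>M\<^esub>
                 (finsum M (\<lambda>x. ps_poly (q x) \<odot>\<^bsub>M\<^esub> x) E \<oplus>\<^bsub>M\<^esub> w'))" if e: "e \<in> E - S" for e
  proof -
    have "e \<in> sumset M (comb M KK S) (sumset M N (tsub M to))" using ES e by blast
    then obtain k z where kz: "k \<in> comb M KK S" "z \<in> sumset M N (tsub M to)" "e = k \<oplus>\<^bsub>M\<^esub> z"
      by (rule sumsetE)
    obtain w t where wt: "w \<in> N" "t \<in> tsub M to" "z = w \<oplus>\<^bsub>M\<^esub> t" using kz(2) by (rule sumsetE)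
    obtain m where m: "m \<in> carrier M" "t = ps_t_minus to \<odot>\<^bsub>M\<^esub> m" using wt(2) unfolding tsub_def by blast
    have "m \<in> sumset M (comb M PP E) N" using cov m(1) by blast
    then obtain p w' where pw: "p \<in> comb M PP E" "w' \<in> N" "m = p \<oplus>\<^bsub>M\<^esub> w'" by (rule sumsetE)
    obtain q where q: "p = finsum M (\<lambda>x. ps_poly (q x) \<odot>\<^bsub>M\<^esub> x) E"
      using Pcomb_coord[OF pw(1) E(2)] by blast
    show ?thesis
      by (intro exI[of _ q] exI[of _ k] exI[of _ w] exI[of _ w'])
         (use kz(1,3) wt(1,3) m(2) pw(2,3) q in simp)
  qed
  then have "\<forall>e\<in>E - S. \<exists>q. \<exists>k w w'. k \<in> comb M KK S \<and> w \<in> N \<and> w' \<in> N \<and>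
           e = k \<oplus>\<^bsub>M\<^esub> (w \<oplus>\<^bsub>M\<^esub> ps_t_minus to \<odot>\<^bsub>M\<^esub>
                 (finsum M (\<lambda>x. ps_poly (q x) \<odot>\<^bsub>M\<^esub> x) E \<oplus>\<^bsub>M\<^esub> w'))" by blast
  then show ?thesis by (rule bchoice)
qed

lemma fiber_at:
  assumes A: "finite A" "A \<subseteq> carrier M" "carrier M \<subseteq> comb M (carrier RR) A"
    and S: "finite S" "S \<subseteq> carrier M" "card S \<le> n"
    and cov: "carrier M \<subseteq> sumset M (comb M KK S) (sumset M (comb M (carrier RR) (Gset s M A (Suc n))) (tsub M t0))"
  shows "spans_fiber M t0 S"
proof -
  let ?T = "tsub M t0"
  define N where "N = (\<lambda>j. comb M (carrier RR) (Gset s M A j))"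
  define Z where "Z = (\<lambda>j. sumset M (N j) ?T)"
  note Ts = psubD[OF psub_tsub[of t0]]
  have Np: "psub (N j)" for j
    unfolding N_def using G_fin[OF A(1,2), of j] by (intro psub_Pspan) auto
  have Zp: "psub (Z j)" for j unfolding Z_def by (rule psub_sumset[OF Np psub_tsub])
  have Zk: "ksub (Z j)" for j by (rule psub_ksub[OF Zp])
  have Ndec: "N (Suc j) \<subseteq> N j" for j unfolding N_def by (rule N_mono[OF A(1,2)])
  have dec: "Z (Suc j) \<subseteq> Z j" for j unfolding Z_def by (rule sumset_mono[OF Ndec order_refl])
  have anti: "Z j' \<subseteq> Z j" if "j \<le> j'" for j j'
    using that
  proof (induction j' rule: dec_induct)
    case base then show ?case by simp
  next
    case (step m) then show ?case using dec[of m] by blast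
  qed
  have Z0: "Z 0 \<subseteq> sumset M (comb M KK S) (Z (Suc n))"
    using cov psubD(1)[OF Zp[of 0]] unfolding Z_def N_def by blast
  obtain k where k: "k \<le> n" "Z k \<subseteq> Z (Suc k)"
    using chain[OF Zk dec S Z0] by blast
  note G = G_fin[OF A(1,2), of k]
  have GT: "Gset s M A k \<subseteq> ?T"
  proof (rule nakayama[OF psub_tsub conjunct1[OF G] order_refl conjunct2[OF G]])
    fix g assume g: "g \<in> Gset s M A k"
    have gc: "g \<in> carrier M" using g G by blast
    have "\<one>\<^bsub>RR\<^esub> \<odot>\<^bsub>M\<^esub> g \<in> N k"
      unfolding N_def by (rule comb_single_P[OF conjunct1[OF G] conjunct2[OF G] g R.one_closed])
    then have "g \<in> N k" using gc by simp
    then have "g \<in> Z k" unfolding Z_def using sumset_left[OF psubD(1)[OF Np] Ts(2)] by blast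
    then have "g \<in> Z (Suc k)" using k(2) by blast
    moreover have "Z (Suc k) \<subseteq> sumset M (comb M mm (Gset s M A k)) ?T"
      unfolding Z_def N_def by (rule sumset_mono[OF N_msub[OF A(1,2)] order_refl])
    ultimately show "g \<in> sumset M (comb M mm (Gset s M A k)) ?T" by blast
  qed
  have NT: "N k \<subseteq> ?T"
    unfolding N_def
  proof (rule comb_least[OF conjunct1[OF G] Ts(1) Ts(2) Ts(3)])
    fix x a assume "x \<in> Gset s M A k" "a \<in> carrier RR"
    then show "a \<odot>\<^bsub>M\<^esub> x \<in> ?T" using GT Ts(4) by blast
  qed
  have ZkT: "Z k \<subseteq> ?T" unfolding Z_def
    by (rule sumset_least[OF psub_ksub[OF psub_tsub] NT order_refl])
  have "Z (Suc n) \<subseteq> ?T" using anti[of k "Suc n"] k(1) ZkT by auto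
  then have "carrier M \<subseteq> sumset M (comb M KK S) ?T"
    using cov sumset_mono[OF order_refl, of "Z (Suc n)" ?T "comb M KK S"] unfolding Z_def N_def by blast
  then show ?thesis unfolding spans_fiber_iff using S by blast
qed

end

context psm
begin

lemma core:
  assumes A: "finite A" "A \<subseteq> carrier M" "carrier M \<subseteq> comb M (carrier RR) A"
    and B: "spans_fiber M to B"
  shows "\<exists>D. poly D to \<noteq> 0 \<and> (\<forall>t0. poly D t0 \<noteq> 0 \<longrightarrow> (\<exists>S. spans_fiber M t0 S \<and> card S \<le> card B))"
proof -
  define n where "n = card B"
  define E where "E = Eset 0 A n"
  define Nn where "Nn = comb M (carrier RR) (Gset s M A (Suc n))"
  have Ef: "finite E" "E \<subseteq> carrier M" using E_fin[OF A(1,2), of 0 n] unfolding E_def by auto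
  have Np: "psub Nn" unfolding Nn_def using G_fin[OF A(1,2), of "Suc n"] by (intro psub_Pspan) auto
  define Zo where "Zo = sumset M Nn (tsub M to)"
  have Zok: "ksub Zo" unfolding Zo_def by (rule psub_ksub[OF psub_sumset[OF Np psub_tsub]])
  have TZ: "tsub M to \<subseteq> Zo" unfolding Zo_def
    by (rule sumset_right[OF psubD(1)[OF psub_tsub] psubD(2)[OF Np]])
  obtain S where S: "S \<subseteq> E" "E \<subseteq> sumset M (comb M KK S) Zo" "card S \<le> n"
    using choose_S[OF Ef Zok TZ B] unfolding n_def by blast
  have fS: "finite S" using S(1) Ef(1) finite_subset by blast
  have Sc: "S \<subseteq> carrier M" using S(1) Ef(2) by blast
  have cov: "carrier M \<subseteq> sumset M (comb M PP E) Nn" unfolding E_def Nn_def by (rule trunc[OF A])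
  obtain qf where qf: "\<forall>e\<in>E - S. \<exists>k w w'. k \<in> comb M KK S \<and> w \<in> Nn \<and> w' \<in> Nn \<and>
           e = k \<oplus>\<^bsub>M\<^esub> (w \<oplus>\<^bsub>M\<^esub> ps_t_minus to \<odot>\<^bsub>M\<^esub>
                 (finsum M (\<lambda>x. ps_poly (qf e x) \<odot>\<^bsub>M\<^esub> x) E \<oplus>\<^bsub>M\<^esub> w'))"
    using rep_exists[OF Ef S(1) S(2)[unfolded Zo_def] cov] by blast
  obtain fl where fl: "distinct fl" "set fl = E - S"
    using finite_distinct_list[of "E - S"] Ef(1) by auto
  define m where "m = length fl"
  define Q where "Q = (\<lambda>e x. [:-to, 1:] * qf e x)"
  define Ap :: "'k poly mat" where "Ap = mat m m (\<lambda>(i, j). (if i = j then 1 else 0) - Q (fl ! i) (fl ! j))"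
  define D where "D = det Ap"
  have Apc: "Ap \<in> carrier_mat m m" unfolding Ap_def by simp
  have hom: "comm_ring_hom (\<lambda>p. poly p t0)" for t0 :: 'k
    by unfold_locales auto
  have PD: "poly D t0 = det (map_mat (\<lambda>p. poly p t0) Ap)" for t0
    unfolding D_def by (rule comm_ring_hom.hom_det[OF hom, symmetric])
  have "map_mat (\<lambda>p. poly p to) Ap = 1\<^sub>m m"
    by (rule eq_matI) (auto simp: Ap_def Q_def)
  then have D1: "poly D to = 1" using PD by simp
  show ?thesis
  proof (intro exI[of _ D] conjI allI impI)
    show "poly D to \<noteq> 0" using D1 by simp
    fix t0 assume Dt: "poly D t0 \<noteq> 0"
    let ?T = "tsub M t0"
    let ?W = "sumset M (comb M KK S) (sumset M Nn ?T)"
    have Zk: "ksub (sumset M Nn ?T)" by (rule psub_ksub[OF psub_sumset[OF Np psub_tsub]])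
    have Wk: "ksub ?W" by (rule KS_ksub[OF Zk fS Sc])
    let ?Am = "map_mat (\<lambda>p. poly p t0) Ap"
    have Amc: "?Am \<in> carrier_mat (length fl) (length fl)" using Apc unfolding m_def by simp
    have detA: "det ?Am \<noteq> 0" using Dt PD by simp
    have flc: "set fl \<subseteq> carrier M" using fl(2) Ef(2) by blast
    have rel: "finsum M (\<lambda>j. ps_const (?Am $$ (i, j)) \<odot>\<^bsub>M\<^esub> fl ! j) {..<length fl} \<in> ?W"
      if i: "i < length fl" for i
    proof -
      let ?e = "fl ! i"
      have e: "?e \<in> E - S" using fl(2) i nth_mem by blast
      obtain k w w' where kw: "k \<in> comb M KK S" "w \<in> Nn" "w' \<in> Nn"
          "?e = k \<oplus>\<^bsub>M\<^esub> (w \<oplus>\<^bsub>M\<^esub> ps_t_minus to \<odot>\<^bsub>M\<^esub>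
                 (finsum M (\<lambda>x. ps_poly (qf ?e x) \<odot>\<^bsub>M\<^esub> x) E \<oplus>\<^bsub>M\<^esub> w'))"
        using qf e by blast
      let ?c = "\<lambda>x. (if x = ?e then 1 else 0) - poly ([:-to, 1:] * qf ?e x) t0"
      have r: "finsum M (\<lambda>x. ps_const (?c x) \<odot>\<^bsub>M\<^esub> x) (E - S) \<in> ?W"
        by (rule rel_at[OF Ef S(1) Np e kw])
      have "finsum M (\<lambda>x. ps_const (?c x) \<odot>\<^bsub>M\<^esub> x) (E - S)
          = finsum M (\<lambda>j. ps_const (?c (fl ! j)) \<odot>\<^bsub>M\<^esub> fl ! j) {..<length fl}"
        using ksum_reindex[OF fl(1) flc, of ?c] fl(2) by simp
      also have "\<dots> = finsum M (\<lambda>j. ps_const (?Am $$ (i, j)) \<odot>\<^bsub>M\<^esub> fl ! j) {..<length fl}"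
      proof (rule M.finsum_cong')
        show "(\<lambda>j. ps_const (?Am $$ (i, j)) \<odot>\<^bsub>M\<^esub> fl ! j) \<in> {..<length fl} \<rightarrow> carrier M"
        proof (rule Pi_I)
          fix j assume "j \<in> {..<length fl}"
          then have "fl ! j \<in> carrier M" using flc by auto
          then show "ps_const (?Am $$ (i, j)) \<odot>\<^bsub>M\<^esub> fl ! j \<in> carrier M" by simp
        qed
        fix j assume "j \<in> {..<length fl}"
        then have j: "j < length fl" by simp
        have "(fl ! j = fl ! i) = (j = i)" using nth_eq_iff_index_eq[OF fl(1) j i] .
        then have "?c (fl ! j) = ?Am $$ (i, j)"
          using i j unfolding Ap_def Q_def m_def by auto
        then show "ps_const (?c (fl ! j)) \<odot>\<^bsub>M\<^esub> fl ! j = ps_const (?Am $$ (i, j)) \<odot>\<^bsub>M\<^esub> fl ! j"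
          by simp
      qed simp
      finally show ?thesis using r by simp
    qed
    have FW: "set fl \<subseteq> ?W" by (rule LA[OF Wk flc Amc detA rel])
    have SW: "S \<subseteq> ?W" using self_in_KS[OF fS Sc _ ksubD(2)[OF Zk]] by blast
    have EW: "E \<subseteq> ?W" using FW SW fl(2) by blast
    have z0K: "\<zero>\<^bsub>RR\<^esub> \<in> KK" by (simp add: ps_const_zero[symmetric])
    have ZW: "sumset M Nn ?T \<subseteq> ?W"
      by (rule sumset_right[OF ksubD(1)[OF Zk] comb_zero[OF fS Sc z0K]])
    have TW: "?T \<subseteq> ?W"
      using sumset_right[OF psubD(1)[OF psub_tsub] psubD(2)[OF Np]] ZW by (rule subset_trans)
    have NW: "Nn \<subseteq> ?W"
      using sumset_left[OF psubD(1)[OF Np] psubD(2)[OF psub_tsub]] ZW by (rule subset_trans)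
    have PW: "comb M PP E \<subseteq> ?W"
      using eval_comb[OF Ef, of t0] KS_least[OF Wk Ef(1) EW TW] by (rule subset_trans)
    have "carrier M \<subseteq> ?W"
      using cov sumset_least[OF Wk PW NW] by (rule subset_trans)
    then have "spans_fiber M t0 S"
      unfolding Nn_def by (rule fiber_at[OF A fS Sc S(3)])
    then show "\<exists>S. spans_fiber M t0 S \<and> card S \<le> card B" using S(3) n_def by blast
  qed
qed

end

theorem mainTheorem6:
  fixes s :: nat
    and M :: "(((nat \<Rightarrow> nat) \<Rightarrow> 'k::field poly), 'm) module"
    and t_o :: 'k
  assumes "Module.module (PS s) M"
    and "fin_gen_module s M"
  shows "\<exists>U. zariski_open_A1 U \<and> t_o \<in> U \<and> (\<forall>t0\<in>U. fiber_dim M t0 \<le> fiber_dim M t_o)"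
proof -
  interpret P: psm s M unfolding psm_def by (rule assms(1))
  show ?thesis
  proof (cases "\<exists>B. spans_fiber M t_o B")
    case False
    then have "fiber_dim M t_o = \<infinity>" by (simp add: fiber_dim_def)
    moreover have "zariski_open_A1 (UNIV :: 'k set)"
      unfolding zariski_open_A1_def by (intro exI[of _ "{1}"]) auto
    ultimately show ?thesis by auto
  next
    case True
    define n where "n = (LEAST n. \<exists>B. spans_fiber M t_o B \<and> card B = n)"
    have ex: "\<exists>n B. spans_fiber M t_o B \<and> card B = n" using True by blast
    have "\<exists>B. spans_fiber M t_o B \<and> card B = n"
      unfolding n_def by (rule LeastI_ex[OF ex])
    then obtain B where B: "spans_fiber M t_o B" "card B = n" by blast
    have fd: "fiber_dim M t_o = enat n" using True unfolding fiber_dim_def n_def by simp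
    obtain A where A: "finite A" "A \<subseteq> carrier M"
      "\<forall>m\<in>carrier M. \<exists>c\<in>A \<rightarrow> carrier (PS s). m = finsum M (\<lambda>a. c a \<odot>\<^bsub>M\<^esub> a) A"
      using assms(2) unfolding fin_gen_module_def by blast
    have Acov: "carrier M \<subseteq> comb M (carrier (PS s)) A"
    proof
      fix m assume "m \<in> carrier M"
      then obtain c where "c \<in> A \<rightarrow> carrier (PS s)" "m = finsum M (\<lambda>a. c a \<odot>\<^bsub>M\<^esub> a) A"
        using A(3) by blast
      then show "m \<in> comb M (carrier (PS s)) A" by (rule P.comb_memI)
    qed
    obtain D where D: "poly D t_o \<noteq> 0"
      "\<And>t0. poly D t0 \<noteq> 0 \<Longrightarrow> \<exists>S. spans_fiber M t0 S \<and> card S \<le> card B"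
      using P.core[OF A(1,2) Acov B(1)] by blast
    let ?U = "- {x. poly D x = 0}"
    have "zariski_open_A1 ?U" unfolding zariski_open_A1_def by (intro exI[of _ "{D}"]) auto
    moreover have "t_o \<in> ?U" using D(1) by simp
    moreover have "fiber_dim M t0 \<le> fiber_dim M t_o" if t0: "t0 \<in> ?U" for t0
    proof -
      obtain S where S: "spans_fiber M t0 S" "card S \<le> card B" using D(2) t0 by auto
      have le: "(LEAST n. \<exists>B. spans_fiber M t0 B \<and> card B = n) \<le> card S"
        by (rule Least_le) (use S(1) in blast)
      have "fiber_dim M t0 = enat (LEAST n. \<exists>B. spans_fiber M t0 B \<and> card B = n)"
        using S(1) unfolding fiber_dim_def by auto
      then show ?thesis using fd le S(2) B(2) by simp
    qed
    ultimately show ?thesis by blast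
  qed
qed


end
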